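(* Let $\widetilde\nu=\mathcal{A}_k(\nu)$ for some $k\in\{1,2\}$ and some $\nu\in\mathfrak{M}_L^k(\mathbb{R}^d)$. Then $\widetilde\nu\in\mathfrak{M}_L(\mathbb{R}^d)$ and $\widetilde\nu$ has a polar decomposition $(\lambda,\ell_\xi(r)\mathrm{d}r)$ with the following properties: $\ell_\xi(r)$ is measurable in $(\xi,r)$ and lower semi-continuous in $r\in(0,\infty)$, and for each $\xi$ there is $b_\xi\in(0,\infty]$ such that $\ell_\xi(r)>0$ for $r<b_\xi$ and, if $b_\xi<\infty$, $\ell_\xi(r)=0$ for $r\ge b_\xi$.
   Context: A Lévy measure on $\mathbb{R}^d$ is a measure $\nu$ with $\nu(\{0\})=0$ and $\int(1\wedge|x|^2)\nu(\mathrm{d}x)<\infty$; their class is $\mathfrak{M}_L(\mathbb{R}^d)=\mathfrak{M}_L^2(\mathbb{R}^d)$, and $\mathfrak{M}_L^1(\mathbb{R}^d)$ is the class of Lévy measures with $\int(1\wedge|x|)\nu(\mathrm{d}x)<\infty$. For $s>0$ set $a_1(r;s)=2\pi^{-1}(s-r^2)^{-1/2}$ for $0<r<s^{1/2}$ and $0$ otherwise; $a_2(r;s)=2\pi^{-1}(s^2-r^2)^{-1/2}$ for $0<r<s$ and $0$ otherwise. $\mathcal{A}_k(\nu)(B)=\int_{\mathbb{R}^d\setminus\{0\}}\nu(\mathrm{d}x)\int_0^\infty a_k(r;|x|)1_B(rx/|x|)\,\mathrm{d}r$. A polar decomposition of $\nu\in\mathfrak{M}_L(\mathbb{R}^d)$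 is a pair $(\lambda,\{\nu_\xi\})$ where $\lambda$ is a measure on the unit sphere $\mathbb{S}=\{|\xi|=1\}$ and $\{\nu_\xi:\xi\in\mathbb{S}\}$ are measures on $(0,\infty)$ with $\nu_\xi(E)$ measurable in $\xi$ for each Borel $E$, $0<\nu_\xi((0,\infty))\le\infty$, and $\nu(B)=\int_{\mathbb{S}}\lambda(\mathrm{d}\xi)\int_0^\infty 1_B(r\xi)\nu_\xi(\mathrm{d}r)$ for all Borel $B$. *)

theory Defs
  imports "HOL-Analysis.Analysis"
begin

text \<open>Levy measures on a Euclidean space 'a (playing the role of R^d):
  nu({0}) = 0 and the integral of min 1 |x|^k is finite.
  levy_measure_k 2 is the class M_L = M_L^2, levy_measure_k 1 is M_L^1.\<close>
definition levy_measure_k :: "nat \<Rightarrow> 'a::euclidean_space measure \<Rightarrow> bool" where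
  "levy_measure_k k nu \<longleftrightarrow> sets nu = sets borel \<and> emeasure nu {0} = 0 \<and>
     (\<integral>\<^sup>+ x. ennreal (min 1 (norm x ^ k)) \<partial>nu) < \<infinity>"

abbreviation levy_measure :: "'a::euclidean_space measure \<Rightarrow> bool" where
  "levy_measure nu \<equiv> levy_measure_k 2 nu"

definition a1 :: "real \<Rightarrow> real \<Rightarrow> real" where
  "a1 r s = (if 0 < r \<and> r < sqrt s then 2 / pi * (1 / sqrt (s - r\<^sup>2)) else 0)"

definition a2 :: "real \<Rightarrow> real \<Rightarrow> real" where
  "a2 r s = (if 0 < r \<and> r < s then 2 / pi * (1 / sqrt (s\<^sup>2 - r\<^sup>2)) else 0)"

definition a_kernel :: "nat \<Rightarrow> real \<Rightarrow> real \<Rightarrow> real" where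
  "a_kernel k = (if k = 1 then a1 else a2)"

definition A_fun :: "nat \<Rightarrow> 'a::euclidean_space measure \<Rightarrow> 'a set \<Rightarrow> ennreal" where
  "A_fun k nu B = (\<integral>\<^sup>+ x. indicator (UNIV - {0}) x *
      (\<integral>\<^sup>+ r. indicator {0<..} r * ennreal (a_kernel k r (norm x)) *
               indicator B ((r / norm x) *\<^sub>R x) \<partial>lborel) \<partial>nu)"

definition A_op :: "nat \<Rightarrow> 'a::euclidean_space measure \<Rightarrow> 'a measure" where
  "A_op k nu = measure_of UNIV (sets borel) (A_fun k nu)"

abbreviation unit_sphere :: "'a::euclidean_space set" where
  "unit_sphere \<equiv> sphere 0 1"

definition polar_decomposition ::
  "'a::euclidean_space measure \<Rightarrow> 'a measure \<Rightarrow> ('a \<Rightarrow> real measure) \<Rightarrow> bool" where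
  "polar_decomposition nu lam nuxi \<longleftrightarrow>
     sets lam = sets (restrict_space borel unit_sphere) \<and>
     (\<forall>\<xi>\<in>unit_sphere. sets (nuxi \<xi>) = sets (restrict_space borel {0<..})) \<and>
     (\<forall>E\<in>sets (restrict_space borel {0<..}). (\<lambda>\<xi>. emeasure (nuxi \<xi>) E) \<in> borel_measurable lam) \<and>
     (\<forall>\<xi>\<in>unit_sphere. 0 < emeasure (nuxi \<xi>) {0<..}) \<and>
     (\<forall>B\<in>sets borel. emeasure nu B =
        (\<integral>\<^sup>+ \<xi>. (\<integral>\<^sup>+ r. indicator B (r *\<^sub>R \<xi>) \<partial>nuxi \<xi>) \<partial>lam))"

definition lsc_at_point :: "(real \<Rightarrow> ennreal) \<Rightarrow> real \<Rightarrow> bool" where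
  "lsc_at_point f r \<longleftrightarrow> (\<forall>c < f r. eventually (\<lambda>s. c < f s) (at r))"

end

theory Submission
  imports Defs "HOL-Probability.Probability"
begin


lemma AE_le_of_set_integrals:
  fixes f g :: "'a \<Rightarrow> ennreal"
  assumes [measurable]: "f \<in> borel_measurable M" "g \<in> borel_measurable M"
  and fin: "integral\<^sup>N M g \<noteq> \<infinity>"
  and le: "\<And>A. A \<in> sets M \<Longrightarrow> (\<integral>\<^sup>+x. f x * indicator A x \<partial>M) \<le> (\<integral>\<^sup>+x. g x * indicator A x \<partial>M)"
  shows "AE x in M. f x \<le> g x"
proof -
  let ?P = "\<lambda>f A. \<integral>\<^sup>+ x. f x * indicator A x \<partial>M"
  let ?N = "{x\<in>space M. g x < f x}"
  have N: "?N \<in> sets M" by measurable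
  have "?P g ?N \<le> integral\<^sup>N M g" by (intro nn_integral_mono) (auto split: split_indicator)
  then have Pg_fin: "?P g ?N \<noteq> \<infinity>" using fin by (auto simp: top_unique)
  have "?P (\<lambda>x. (f x - g x)) ?N = (\<integral>\<^sup>+x. f x * indicator ?N x - g x * indicator ?N x \<partial>M)"
    by (auto intro!: nn_integral_cong simp: indicator_def)
  also have "\<dots> = ?P f ?N - ?P g ?N"
  proof (rule nn_integral_diff)
    show "(\<lambda>x. f x * indicator ?N x) \<in> borel_measurable M" "(\<lambda>x. g x * indicator ?N x) \<in> borel_measurable M"
      using N by auto
    show "AE x in M. g x * indicator ?N x \<le> f x * indicator ?N x"
      by (auto split: split_indicator)
  qed fact
  also have "\<dots> = 0"
    using le[OF N] Pg_fin by (intro diff_eq_0_ennreal) (auto simp: top_unique less_top)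
  finally have "AE x in M. (f x - g x) * indicator ?N x = 0"
    by (subst (asm) nn_integral_0_iff_AE) auto
  with AE_space show ?thesis
    by eventually_elim (auto simp: indicator_def not_less diff_eq_0_iff_ennreal split: if_splits)
qed

definition dq :: "nat \<Rightarrow> real \<Rightarrow> real" where
  "dq j t = (of_int \<lfloor>t * 2^j\<rfloor> + 1) / 2^j"

definition Dy :: "real set" where
  "Dy = (\<lambda>(i::int, j::nat). of_int i / 2^j) ` UNIV"

lemma countable_Dy: "countable Dy"
  unfolding Dy_def by simp

lemma dq_in_Dy: "dq j t \<in> Dy"
  unfolding Dy_def dq_def by (auto intro!: image_eqI[where x="(\<lfloor>t * 2^j\<rfloor> + 1, j)"])

lemma int_in_Dy: "of_int i \<in> Dy"
  unfolding Dy_def by (auto intro!: image_eqI[where x="(i, 0)"])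

lemma dq_gt: "t < dq j t"
proof -
  have "t * 2^j < of_int \<lfloor>t * 2^j\<rfloor> + 1" by linarith
  then show ?thesis unfolding dq_def by (simp add: field_simps)
qed

lemma dq_le: "dq j t \<le> t + 1 / 2^j"
proof -
  have "of_int \<lfloor>t * 2^j\<rfloor> + 1 \<le> t * 2^j + 1" by linarith
  then show ?thesis unfolding dq_def by (simp add: field_simps)
qed

lemma dq_mono: "s \<le> t \<Longrightarrow> dq j s \<le> dq j t"
proof -
  assume "s \<le> t"
  then have "\<lfloor>s * 2^j\<rfloor> \<le> \<lfloor>t * 2^j\<rfloor>" by (intro floor_mono) simp
  then show ?thesis unfolding dq_def by (simp add: divide_right_mono)
qed

lemma dq_dec: "dq (Suc j) t \<le> dq j t"
proof -
  define y where "y = t * 2^j"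
  have e: "t * 2 ^ Suc j = 2 * y" by (simp add: y_def)
  have h: "\<lfloor>2 * y\<rfloor> \<le> 2 * \<lfloor>y\<rfloor> + 1" by linarith
  have hr: "real_of_int \<lfloor>2 * y\<rfloor> \<le> 2 * real_of_int \<lfloor>y\<rfloor> + 1"
  proof -
    have "real_of_int \<lfloor>2 * y\<rfloor> \<le> real_of_int (2 * \<lfloor>y\<rfloor> + 1)" using h by (simp only: of_int_le_iff)
    then show ?thesis by simp
  qed
  have "of_int \<lfloor>2 * y\<rfloor> + 1 \<le> 2 * (of_int \<lfloor>y\<rfloor> + (1::real))"
    by (rule order_trans[OF add_right_mono[OF hr]]) simp
  then have "of_int \<lfloor>t * 2 ^ Suc j\<rfloor> + 1 \<le> 2 * (of_int \<lfloor>t * 2^j\<rfloor> + (1::real))"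
    unfolding e by (simp add: y_def)
  then have "(of_int \<lfloor>t * 2 ^ Suc j\<rfloor> + 1) / 2 \<le> (of_int \<lfloor>t * 2^j\<rfloor> + (1::real))" by simp
  then have "((of_int \<lfloor>t * 2 ^ Suc j\<rfloor> + 1) / 2) / 2^j \<le> (of_int \<lfloor>t * 2^j\<rfloor> + (1::real)) / 2^j"
    by (rule divide_right_mono) simp
  then show ?thesis unfolding dq_def by (simp add: divide_divide_eq_left mult.commute)
qed

lemma decseq_dq: "decseq (\<lambda>j. dq j t)"
  by (rule decseq_SucI) (rule dq_dec)

lemma dq_const: assumes "t \<le> s" "s < dq j t" shows "dq j s = dq j t"
proof -
  have "t * 2^j \<le> s * 2^j" using assms by simp
  moreover have "s * 2^j < of_int \<lfloor>t * 2^j\<rfloor> + 1" using assms(2) unfolding dq_def by (simp add: field_simps)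
  ultimately have "\<lfloor>s * 2^j\<rfloor> = \<lfloor>t * 2^j\<rfloor>" by linarith
  then show ?thesis unfolding dq_def by simp
qed

lemma dq_small: assumes "t < a" shows "\<exists>j. dq j t < a"
proof -
  obtain j where "(1/2::real)^j < a - t"
    using real_arch_pow_inv[of "a - t" "1/2"] assms by auto
  then have "t + 1/2^j < a" by (simp add: power_divide)
  then show ?thesis using dq_le[of j t] by (intro exI[of _ j]) linarith
qed

lemma Inter_dq: "(\<Inter>j. {..dq j t}) = {..t}"
proof safe
  fix x assume "x \<in> (\<Inter>j. {..dq j t})"
  show "x \<le> t"
  proof (rule ccontr)
    assume "\<not> x \<le> t"
    then obtain j where "dq j t < x" using dq_small[of t x] by auto
    moreover have "x \<le> dq j t" using \<open>x \<in> (\<Inter>j. {..dq j t})\<close> by auto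
    ultimately show False by linarith
  qed
next
  fix x j assume "x \<le> t" then show "x \<le> dq j t" using dq_gt[of t j] by simp
qed




lemma Int_stable_atMost_real: "Int_stable (range (atMost :: real \<Rightarrow> real set))"
  by (auto simp: Int_stable_def intro!: image_eqI[where x="min _ _"])

lemma disintegration:
  fixes \<mu> :: "('b \<times> real) measure" and X :: "'b measure"
  assumes sets_\<mu>: "sets \<mu> = sets (X \<Otimes>\<^sub>M borel)" and fin: "finite_measure \<mu>"
  shows "\<exists>K. K \<in> X \<rightarrow>\<^sub>M prob_algebra borel \<and>
     \<mu> = distr \<mu> X fst \<bind> (\<lambda>x. distr (K x) (X \<Otimes>\<^sub>M borel) (Pair x))"
proof -
  interpret \<mu>: finite_measure \<mu> by fact
  define lam where "lam = distr \<mu> X fst"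
  have space_\<mu>: "space \<mu> = space X \<times> UNIV"
    using sets_eq_imp_space_eq[OF sets_\<mu>] by (simp add: space_pair_measure)
  have fst_meas[measurable]: "fst \<in> \<mu> \<rightarrow>\<^sub>M X"
    using measurable_fst[of X borel] by (simp add: measurable_cong_sets[OF sets_\<mu> refl])
  have sets_lam[measurable_cong]: "sets lam = sets X" and space_lam: "space lam = space X"
    by (auto simp: lam_def)
  interpret lam: finite_measure lam
    unfolding lam_def by (rule \<mu>.finite_measure_distr) (rule fst_meas)
  have rect[measurable]: "A \<in> sets X \<Longrightarrow> A \<times> B \<in> sets \<mu>" if "B \<in> sets borel" for A B
    using that by (simp add: sets_\<mu>)
  define R where "R A t = emeasure \<mu> (A \<times> {..t})" for A t
  define N where "N t = distr (density \<mu> (indicator (space X \<times> {..t}))) X fst" for t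
  have sets_N: "sets (N t) = sets lam" for t by (simp add: N_def sets_lam)
  have emN: "emeasure (N t) A = R A t" if A: "A \<in> sets X" for A t
  proof -
    have "emeasure (N t) A = emeasure (density \<mu> (indicator (space X \<times> {..t}))) (fst -` A \<inter> space \<mu>)"
      unfolding N_def using A by (subst emeasure_distr) auto
    also have "\<dots> = (\<integral>\<^sup>+x. indicator (space X \<times> {..t}) x * indicator (fst -` A \<inter> space \<mu>) x \<partial>\<mu>)"
      using A by (subst emeasure_density) auto
    also have "\<dots> = (\<integral>\<^sup>+x. indicator (A \<times> {..t}) x \<partial>\<mu>)"
      using sets.sets_into_space[OF A] by (intro nn_integral_cong) (auto simp: space_\<mu> split: split_indicator)
    also have "\<dots> = R A t" using A by (simp add: R_def)
    finally show ?thesis .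
  qed
  have R_le: "R A t \<le> emeasure lam A" if A: "A \<in> sets X" for A t
  proof -
    have "emeasure lam A = emeasure \<mu> (fst -` A \<inter> space \<mu>)"
      unfolding lam_def using A by (subst emeasure_distr) auto
    moreover have "A \<times> {..t} \<subseteq> fst -` A \<inter> space \<mu>"
      using sets.sets_into_space[OF A] by (auto simp: space_\<mu>)
    ultimately show ?thesis unfolding R_def using A
      by (metis emeasure_mono fst_meas measurable_sets)
  qed
  have ac: "absolutely_continuous lam (N t)" for t
    unfolding absolutely_continuous_def
  proof
    fix A assume "A \<in> null_sets lam"
    then have A: "A \<in> sets X" "emeasure lam A = 0" by (auto simp: sets_lam)
    then show "A \<in> null_sets (N t)" using R_le[OF A(1), of t] emN[OF A(1), of t]
      by (auto simp: null_sets_def sets_N sets_lam)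
  qed
  define F where "F t = RN_deriv lam (N t)" for t
  have F_meas[measurable]: "F t \<in> borel_measurable lam" for t
    unfolding F_def by simp
  have F_meas'[measurable]: "F t \<in> borel_measurable X" for t
    using F_meas[of t] by (simp add: measurable_cong_sets[OF sets_lam refl])
  have F_int: "(\<integral>\<^sup>+x. F t x * indicator A x \<partial>lam) = R A t" if A: "A \<in> sets X" for A t
  proof -
    have "density lam (F t) = N t" unfolding F_def
      by (rule lam.density_RN_deriv[OF ac sets_N])
    then have "emeasure (density lam (F t)) A = R A t" using emN[OF A] by simp
    then show ?thesis using A by (subst (asm) emeasure_density) (auto simp: sets_lam)
  qed
  have R_fin: "R A t \<noteq> \<infinity>" for A t unfolding R_def by simp
  have lam_fin: "emeasure lam A \<noteq> \<infinity>" for A by simp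
  have F_int_fin: "integral\<^sup>N lam (F t) \<noteq> top" for t
  proof -
    have "integral\<^sup>N lam (F t) = (\<integral>\<^sup>+x. F t x * indicator (space X) x \<partial>lam)"
      by (intro nn_integral_cong) (auto simp: space_lam)
    then show ?thesis using F_int[of "space X" t] R_fin by simp
  qed
  have R_mono: "R A a \<le> R A b" if "a \<le> b" "A \<in> sets X" for A a b
    unfolding R_def using that by (intro emeasure_mono) auto
  have AE_mono2: "AE x in lam. F a x \<le> F b x" if "a \<le> b" for a b
    by (rule AE_le_of_set_integrals) (auto simp: F_int sets_lam R_mono that intro!: F_int_fin)
  have AE_mono: "AE x in lam. \<forall>a\<in>Dy. \<forall>b\<in>Dy. a \<le> b \<longrightarrow> F a x \<le> F b x"
  proof (intro AE_ball_countable[THEN iffD2] countable_Dy ballI)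
    fix a b
    show "AE x in lam. a \<le> b \<longrightarrow> F a x \<le> F b x"
    proof (cases "a \<le> b")
      case True then show ?thesis using AE_mono2[OF True] by eventually_elim auto
    qed simp
  qed
  have lam_ind: "emeasure lam A = (\<integral>\<^sup>+x. 1 * indicator A x \<partial>lam)" if "A \<in> sets X" for A
    using that by (simp add: sets_lam)
  have AE_le1': "AE x in lam. F a x \<le> 1" for a
    by (rule AE_le_of_set_integrals) (auto simp: F_int sets_lam R_le lam_ind[symmetric])
  have AE_le1: "AE x in lam. \<forall>a\<in>Dy. F a x \<le> 1"
    by (intro AE_ball_countable[THEN iffD2] countable_Dy ballI AE_le1')
  have lam_emeasure: "emeasure lam A = emeasure \<mu> (fst -` A \<inter> space \<mu>)" if "A \<in> sets X" for A
    unfolding lam_def using that by (subst emeasure_distr) auto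
  have AE_sup: "AE x in lam. (SUP n. F (real n) x) = 1"
  proof -
    have le: "AE x in lam. (SUP n. F (real n) x) \<le> 1"
    proof -
      have "AE x in lam. \<forall>n. F (real n) x \<le> 1"
        by (intro AE_all_countable[THEN iffD2] allI AE_le1')
      then show ?thesis by eventually_elim (auto intro: SUP_least)
    qed
    have ge: "AE x in lam. 1 \<le> (SUP n. F (real n) x)"
    proof (rule AE_le_of_set_integrals)
      have "integral\<^sup>N lam (\<lambda>x. SUP n. F (real n) x) \<le> integral\<^sup>N lam (\<lambda>x. 1)"
        by (intro nn_integral_mono_AE le)
      then show "integral\<^sup>N lam (\<lambda>x. SUP n. F (real n) x) \<noteq> \<infinity>"
        by (auto simp: top_unique)
    next
      fix A assume A: "A \<in> sets lam"
      then have A': "A \<in> sets X" by (simp add: sets_lam)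
      have "(\<Union>n. A \<times> {..real n}) = fst -` A \<inter> space \<mu>"
        using sets.sets_into_space[OF A'] by (auto simp: space_\<mu> intro: real_arch_simple)
      moreover have "incseq (\<lambda>n. A \<times> {..real n})"
        by (auto simp: incseq_def)
      ultimately have eq: "(SUP n. R A (real n)) = emeasure lam A"
        unfolding R_def lam_emeasure[OF A'] using A'
        by (subst SUP_emeasure_incseq) auto
      have le': "R A (real n) \<le> (\<integral>\<^sup>+x. (SUP n. F (real n) x) * indicator A x \<partial>lam)" for n
        unfolding F_int[OF A', symmetric]
        by (intro nn_integral_mono mult_right_mono SUP_upper) auto
      have "(SUP n. R A (real n)) \<le> (\<integral>\<^sup>+x. (SUP n. F (real n) x) * indicator A x \<partial>lam)"
        by (intro SUP_least le')
      then have "emeasure lam A \<le> (\<integral>\<^sup>+x. (SUP n. F (real n) x) * indicator A x \<partial>lam)"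
        by (simp only: eq)
      then show "(\<integral>\<^sup>+x. 1 * indicator A x \<partial>lam) \<le> (\<integral>\<^sup>+x. (SUP n. F (real n) x) * indicator A x \<partial>lam)"
        using A by simp
    qed auto
    from le ge show ?thesis by eventually_elim (rule antisym)
  qed
  have AE_inf: "AE x in lam. (INF n. F (- real n) x) = 0"
  proof -
    have "(\<Inter>n. space X \<times> {..- real n}) = {}"
    proof safe
      fix a b assume "(a, b) \<in> (\<Inter>n. space X \<times> {..- real n})"
      moreover obtain n where "- b < real n" using reals_Archimedean2 by blast
      ultimately show "(a, b) \<in> {}" by (auto dest!: spec[of _ n])
    qed
    moreover have "decseq (\<lambda>n. space X \<times> {..- real n})"
      by (auto simp: decseq_def)
    ultimately have "(INF n. R (space X) (- real n)) = 0"
      unfolding R_def by (subst INF_emeasure_decseq) auto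
    moreover have le': "integral\<^sup>N lam (\<lambda>x. INF n. F (- real n) x) \<le> R (space X) (- real n)" for n
    proof -
      have "integral\<^sup>N lam (\<lambda>x. INF n. F (- real n) x) \<le> (\<integral>\<^sup>+x. F (- real n) x * indicator (space X) x \<partial>lam)"
        by (intro nn_integral_mono) (auto simp: space_lam intro: INF_lower)
      then show ?thesis by (simp add: F_int)
    qed
    ultimately have "integral\<^sup>N lam (\<lambda>x. INF n. F (- real n) x) \<le> 0"
      by (metis INF_greatest)
    then have "integral\<^sup>N lam (\<lambda>x. INF n. F (- real n) x) = 0" by simp
    then show ?thesis by (subst (asm) nn_integral_0_iff_AE) auto
  qed
  define dy :: "int \<times> nat \<Rightarrow> real" where "dy p = of_int (fst p) / 2 ^ snd p" for p
  have Dy_eq: "Dy = range dy" unfolding Dy_def dy_def by (auto simp: case_prod_beta)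
  define G where "G = {x \<in> space X. (\<forall>a\<in>Dy. \<forall>b\<in>Dy. a \<le> b \<longrightarrow> F a x \<le> F b x) \<and> (\<forall>a\<in>Dy. F a x \<le> 1) \<and>
     (SUP n. F (real n) x) = 1 \<and> (INF n. F (- real n) x) = 0}"
  have G_alt: "G = {x \<in> space X. (\<forall>p q. dy p \<le> dy q \<longrightarrow> F (dy p) x \<le> F (dy q) x) \<and> (\<forall>p. F (dy p) x \<le> 1) \<and>
     (SUP n. F (real n) x) = 1 \<and> (INF n. F (- real n) x) = 0}"
    unfolding G_def Dy_eq by auto
  have G_sets[measurable]: "G \<in> sets X"
    unfolding G_alt by measurable
  have AE_G: "AE x in lam. x \<in> G"
    using AE_space AE_mono AE_le1 AE_sup AE_inf by eventually_elim (auto simp: G_def space_lam)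
  define \<Psi> where "\<Psi> x t = (INF j. F (dq j t) x)" for x t
  define \<Phi> where "\<Phi> x t = enn2real (\<Psi> x t)" for x t
  have \<Psi>_meas[measurable]: "(\<lambda>x. \<Psi> x t) \<in> borel_measurable X" for t
    unfolding \<Psi>_def by measurable
  have Dy_real: "real n \<in> Dy" "- real n \<in> Dy" for n :: nat
    using int_in_Dy[of "int n"] int_in_Dy[of "- int n"] by auto
  have g1: "F a x \<le> F b x" if "x \<in> G" "a \<in> Dy" "b \<in> Dy" "a \<le> b" for x a b
    using that by (auto simp: G_def)
  have g2: "F a x \<le> 1" if "x \<in> G" "a \<in> Dy" for x a
    using that by (auto simp: G_def)
  have psi_le: "\<Psi> x t \<le> F a x" if xa: "x \<in> G" "a \<in> Dy" "t < a" for x a t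
  proof -
    obtain j where j: "dq j t < a" using dq_small[OF xa(3)] by auto
    have "\<Psi> x t \<le> F (dq j t) x" unfolding \<Psi>_def by (rule INF_lower) simp
    also have "\<dots> \<le> F a x" using g1[OF xa(1) dq_in_Dy xa(2)] j by simp
    finally show ?thesis .
  qed
  have psi_ge: "F a x \<le> \<Psi> x t" if "x \<in> G" "a \<in> Dy" "a \<le> t" for x a t
    unfolding \<Psi>_def
  proof (rule INF_greatest)
    fix j show "F a x \<le> F (dq j t) x"
      using g1[OF that(1) that(2) dq_in_Dy] dq_gt[of t j] that(3) by simp
  qed
  have psi_le1: "\<Psi> x t \<le> 1" if "x \<in> G" for x t
  proof -
    have "t < of_int (\<lfloor>t\<rfloor> + 1)" by linarith
    from order_trans[OF psi_le[OF that int_in_Dy this] g2[OF that int_in_Dy]] show ?thesis .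
  qed
  have psi_fin: "\<Psi> x t \<noteq> top" if "x \<in> G" for x t
    using psi_le1[OF that, of t] by (auto simp: top_unique)
  have psi_eq: "ennreal (\<Phi> x t) = \<Psi> x t" if "x \<in> G" for x t
    unfolding \<Phi>_def using psi_fin[OF that, of t] by (simp add: less_top)
  have psi_mono: "\<Psi> x s \<le> \<Psi> x t" if "x \<in> G" "s \<le> t" for x s t
    unfolding \<Psi>_def
  proof (rule INF_greatest)
    fix j show "(INF j. F (dq j s) x) \<le> F (dq j t) x"
      using g1[OF that(1) dq_in_Dy dq_in_Dy dq_mono[OF that(2)]] by (rule INF_lower2[rotated]) simp
  qed
  have phi_mono: "\<Phi> x s \<le> \<Phi> x t" if "x \<in> G" "s \<le> t" for x s t
    unfolding \<Phi>_def using psi_mono[OF that] psi_fin[OF that(1)] by (intro enn2real_mono) (auto simp: less_top)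
  have phi_nonneg: "0 \<le> \<Phi> x t" for x t unfolding \<Phi>_def by simp
  have phi_le1: "\<Phi> x t \<le> 1" if "x \<in> G" for x t
    unfolding \<Phi>_def using psi_le1[OF that, of t] enn2real_mono[of _ 1] by fastforce
  have phi_rc: "continuous (at_right t) (\<Phi> x)" if x: "x \<in> G" for x t
  proof (subst continuous_at_right_real_increasing)
    show "\<And>a b. a \<le> b \<Longrightarrow> \<Phi> x a \<le> \<Phi> x b" by (rule phi_mono[OF x])
    show "\<forall>\<epsilon>>0. \<exists>\<delta>>0. \<Phi> x (t + \<delta>) - \<Phi> x t < \<epsilon>"
    proof (intro allI impI)
      fix \<epsilon> :: real assume e: "0 < \<epsilon>"
      have "\<Psi> x t < \<Psi> x t + ennreal \<epsilon>"
        using psi_fin[OF x, of t] e by (cases "\<Psi> x t") (auto simp: ennreal_plus[symmetric] ennreal_less_iff simp del: ennreal_plus)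
      then obtain j where j: "F (dq j t) x < \<Psi> x t + ennreal \<epsilon>"
        unfolding \<Psi>_def[of x t] by (auto simp: INF_less_iff)
      define \<delta> where "\<delta> = (dq j t - t) / 2"
      have d: "0 < \<delta>" using dq_gt[of t j] by (simp add: \<delta>_def)
      have "dq j (t + \<delta>) = dq j t"
        by (rule dq_const) (use d dq_gt[of t j] in \<open>auto simp: \<delta>_def field_simps\<close>)
      then have "\<Psi> x (t + \<delta>) \<le> F (dq j t) x"
        unfolding \<Psi>_def by (intro INF_lower2[where i=j]) auto
      with j have "ennreal (\<Phi> x (t + \<delta>)) < ennreal (\<Phi> x t) + ennreal \<epsilon>"
        by (simp add: psi_eq[OF x])
      then have "\<Phi> x (t + \<delta>) < \<Phi> x t + \<epsilon>"
        using e phi_nonneg[of x t] phi_nonneg[of x "t + \<delta>"] by (simp add: ennreal_plus[symmetric] ennreal_less_iff del: ennreal_plus)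
      with d show "\<exists>\<delta>>0. \<Phi> x (t + \<delta>) - \<Phi> x t < \<epsilon>" by (intro exI[of _ \<delta>]) auto
    qed
  qed
  have phi_top: "(\<Phi> x \<longlongrightarrow> 1) at_top" if x: "x \<in> G" for x
  proof (rule order_tendstoI)
    fix a :: real assume "1 < a"
    then show "eventually (\<lambda>t. \<Phi> x t < a) at_top" using phi_le1[OF x] by (intro always_eventually allI) (rule le_less_trans)
  next
    fix a :: real assume a: "a < 1"
    show "eventually (\<lambda>t. a < \<Phi> x t) at_top"
    proof (cases "a < 0")
      case True then show ?thesis using phi_nonneg[of x] by (intro always_eventually allI) (rule less_le_trans)
    next
      case False
      have "ennreal a < (SUP n. F (real n) x)" using x a False by (auto simp: G_def ennreal_less_one_iff)
      then obtain n where n: "ennreal a < F (real n) x" by (auto simp: less_SUP_iff)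
      have "a < \<Phi> x t" if "real n \<le> t" for t
      proof -
        have "ennreal a < ennreal (\<Phi> x t)"
          using order_less_le_trans[OF n psi_ge[OF x Dy_real(1) that]] psi_eq[OF x, of t] by simp
        then show ?thesis using False by (simp add: ennreal_less_iff)
      qed
      then show ?thesis by (auto simp: eventually_at_top_linorder)
    qed
  qed
  have phi_bot: "(\<Phi> x \<longlongrightarrow> 0) at_bot" if x: "x \<in> G" for x
  proof (rule order_tendstoI)
    fix a :: real assume "a < 0"
    then show "eventually (\<lambda>t. a < \<Phi> x t) at_bot" using phi_nonneg[of x] by (intro always_eventually allI) (rule less_le_trans)
  next
    fix a :: real assume a: "0 < a"
    have "(INF n. F (- real n) x) < ennreal a" using x a by (auto simp: G_def)
    then obtain n where n: "F (- real n) x < ennreal a" by (auto simp: INF_less_iff)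
    have "\<Phi> x t < a" if "t \<le> - real n - 1" for t
    proof -
      have "t < - real n" using that by linarith
      have "ennreal (\<Phi> x t) < ennreal a"
        using order_le_less_trans[OF psi_le[OF x Dy_real(2) \<open>t < - real n\<close>] n] psi_eq[OF x, of t] by simp
      then show ?thesis using a by (simp add: ennreal_less_iff phi_nonneg)
    qed
    then show "eventually (\<lambda>t. \<Phi> x t < a) at_bot" by (auto simp: eventually_at_bot_linorder)
  qed
  define K where "K x = (if x \<in> G then interval_measure (\<Phi> x) else return borel 0)" for x
  have K_G: "real_distribution (interval_measure (\<Phi> x))" if x: "x \<in> G" for x
    by (rule real_distribution_interval_measure) (auto intro: phi_mono[OF x] phi_rc[OF x] phi_top[OF x] phi_bot[OF x])
  have K_prob: "prob_space (K x)" for x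
    using K_G by (auto simp: K_def real_distribution_def prob_space_return)
  have sets_K: "sets (K x) = sets borel" for x
    by (auto simp: K_def)
  have K_Iic: "emeasure (K x) {..t} = \<Psi> x t" if x: "x \<in> G" for x t
  proof -
    have "emeasure (K x) {..t} = ennreal (\<Phi> x t)"
      unfolding K_def using x
      by (simp, intro emeasure_interval_measure_Iic) (auto intro: phi_mono[OF x] phi_rc[OF x] phi_bot[OF x])
    then show ?thesis using psi_eq[OF x] by simp
  qed
  have borel_sigma: "sets (borel :: real measure) = sigma_sets UNIV (range atMost)"
    by (subst borel_eq_atMost) (simp add: sets_measure_of)
  have K_meas: "K \<in> X \<rightarrow>\<^sub>M prob_algebra borel"
  proof (rule measurable_prob_algebra_generated[OF borel_sigma Int_stable_atMost_real])
    show "range atMost \<subseteq> Pow UNIV" by simp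
    show "prob_space (K a)" for a by (rule K_prob)
    show "sets (K a) = sets borel" for a by (rule sets_K)
    fix A :: "real set" assume "A \<in> range atMost"
    then obtain t where A: "A = {..t}" by auto
    have "(\<lambda>x. if x \<in> G then \<Psi> x t else emeasure (return borel (0::real)) {..t}) \<in> borel_measurable X"
      by measurable
    then show "(\<lambda>a. emeasure (K a) A) \<in> borel_measurable X"
      by (rule measurable_cong[THEN iffD1, rotated]) (auto simp: A K_Iic; simp add: K_def)
  qed
  define Kd where "Kd x = distr (K x) (X \<Otimes>\<^sub>M borel) (Pair x)" for x
  have Kd_meas: "Kd \<in> X \<rightarrow>\<^sub>M subprob_algebra (X \<Otimes>\<^sub>M borel)"
    unfolding Kd_def
    by (rule measurable_distr2[where f="\<lambda>x y. (x, y)"]) (auto intro: measurable_prob_algebraD[OF K_meas])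
  have Kd_meas': "Kd \<in> lam \<rightarrow>\<^sub>M subprob_algebra (X \<Otimes>\<^sub>M borel)"
    using Kd_meas by (simp add: measurable_cong_sets[OF sets_lam refl])
  have "\<mu> = lam \<bind> Kd"
  proof (cases "space X = {}")
    case True
    then have "space \<mu> = {}" by (simp add: space_\<mu>)
    moreover have "space lam = {}" using True by (simp add: space_lam)
    ultimately show ?thesis by (simp add: space_empty bind_empty)
  next
    case False
    define \<Omega> where "\<Omega> = space X \<times> (UNIV :: real set)"
    define E where "E = {a \<times> b | a b. a \<in> sets X \<and> b \<in> range (atMost :: real \<Rightarrow> real set)}"
    have sets_prod: "sets (X \<Otimes>\<^sub>M borel) = sigma_sets \<Omega> E"
    proof -
      have "sets (X \<Otimes>\<^sub>M borel) = sets (sigma (space X \<times> space (borel :: real measure)) E)"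
        unfolding E_def
        by (rule sets_pair_eq[where Ca="{space X}" and Cb="range (\<lambda>n::nat. {..real n})"])
           (auto simp: sets.space_closed borel_sigma sets.sigma_sets_eq intro: real_arch_simple)
      also have "\<dots> = sigma_sets \<Omega> E"
        unfolding \<Omega>_def E_def using sets.space_closed[of X] by (subst sets_measure_of) auto
      finally show ?thesis .
    qed
    show ?thesis
    proof (rule measure_eqI_generator_eq[where E=E and \<Omega>=\<Omega> and A="\<lambda>i. space X \<times> {..real i}"])
      show "Int_stable E"
        unfolding Int_stable_def
      proof (intro ballI)
        fix P Q assume "P \<in> E" "Q \<in> E"
        then obtain a s b t where PQ: "P = a \<times> {..s}" "Q = b \<times> {..t}" "a \<in> sets X" "b \<in> sets X"
          unfolding E_def by auto
        have "P \<inter> Q = (a \<inter> b) \<times> {..min s t}" unfolding PQ by auto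
        then show "P \<inter> Q \<in> E" unfolding E_def using PQ by blast
      qed
      show "E \<subseteq> Pow \<Omega>" unfolding E_def \<Omega>_def using sets.sets_into_space[of _ X] by auto
      show "sets \<mu> = sigma_sets \<Omega> E" using sets_\<mu> sets_prod by simp
      show "sets (lam \<bind> Kd) = sigma_sets \<Omega> E"
        using sets_prod False by (subst sets_bind[where N="X \<Otimes>\<^sub>M borel"]) (auto simp: Kd_def space_lam)
      show "range (\<lambda>i. space X \<times> {..real i}) \<subseteq> E" unfolding E_def by auto
      show "(\<Union>i. space X \<times> {..real i}) = \<Omega>" unfolding \<Omega>_def by (auto intro: real_arch_simple)
      show "emeasure \<mu> (space X \<times> {..real i}) \<noteq> \<infinity>" for i by simp
    next
      fix Y assume "Y \<in> E"
      then obtain A t where A: "A \<in> sets X" and Y: "Y = A \<times> {..t}" unfolding E_def by auto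
      have Y_sets: "Y \<in> sets (X \<Otimes>\<^sub>M borel)" using A Y by simp
      have "emeasure (lam \<bind> Kd) Y = (\<integral>\<^sup>+x. emeasure (Kd x) Y \<partial>lam)"
        using False Kd_meas' Y_sets by (intro emeasure_bind) (auto simp: space_lam)
      also have "\<dots> = (\<integral>\<^sup>+x. \<Psi> x t * indicator A x \<partial>lam)"
      proof (rule nn_integral_cong_AE)
        show "AE x in lam. emeasure (Kd x) Y = \<Psi> x t * indicator A x"
          using AE_G
        proof eventually_elim
          case (elim x)
          then have x: "x \<in> space X" by (auto simp: G_def)
          have "emeasure (Kd x) Y = emeasure (K x) (Pair x -` Y \<inter> space (K x))"
            unfolding Kd_def using x Y_sets
            by (subst emeasure_distr) (auto simp: measurable_cong_sets[OF sets_K refl])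
          also have "\<dots> = emeasure (K x) {..t} * indicator A x"
            by (auto simp: Y sets_eq_imp_space_eq[OF sets_K] split: split_indicator)
          finally show ?case using K_Iic[OF elim] by simp
        qed
      qed
      also have "\<dots> = (\<integral>\<^sup>+x. (INF j. F (dq j t) x * indicator A x) \<partial>lam)"
        by (intro nn_integral_cong) (auto simp: \<Psi>_def split: split_indicator)
      also have "\<dots> = (INF j. \<integral>\<^sup>+x. F (dq j t) x * indicator A x \<partial>lam)"
      proof (rule nn_integral_monotone_convergence_INF_AE')
        show "AE x in lam. F (dq (Suc j) t) x * indicator A x \<le> F (dq j t) x * indicator A x" for j
          using AE_G by eventually_elim (auto intro!: mult_right_mono g1 dq_in_Dy dq_dec)
        show "(\<lambda>x. F (dq j t) x * indicator A x) \<in> borel_measurable lam" for j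
          using A by (simp add: sets_lam)
        have "(\<integral>\<^sup>+ x. F (dq 0 t) x * indicator A x \<partial>lam) = R A (dq 0 t)" using F_int[OF A] .
        then show "(\<integral>\<^sup>+ x. F (dq 0 t) x * indicator A x \<partial>lam) < \<infinity>" using R_fin by (simp add: less_top)
      qed
      also have "\<dots> = (INF j. emeasure \<mu> (A \<times> {..dq j t}))"
        using F_int[OF A] by (simp add: R_def)
      also have "\<dots> = emeasure \<mu> (\<Inter>j. A \<times> {..dq j t})"
        using A by (intro INF_emeasure_decseq) (auto simp: decseq_def intro: order_trans[OF _ decseqD[OF decseq_dq]])
      also have "(\<Inter>j. A \<times> {..dq j t}) = A \<times> (\<Inter>j. {..dq j t})" by auto
      also have "\<dots> = Y" by (simp add: Inter_dq Y)
      finally show "emeasure \<mu> Y = emeasure (lam \<bind> Kd) Y" ..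
    qed
  qed
  then show ?thesis using K_meas unfolding Kd_def lam_def by blast
qed




definition Bk :: "nat \<Rightarrow> real \<Rightarrow> real" where
  "Bk k s = (if k = 1 then sqrt s else s)"

lemma a_kernel_alt:
  assumes "k \<in> {1,2}" "0 < s"
  shows "a_kernel k r s = (if 0 < r \<and> r < Bk k s then 2/pi * (1/sqrt ((Bk k s)\<^sup>2 - r\<^sup>2)) else 0)"
  using assms by (auto simp: a_kernel_def a1_def a2_def Bk_def)

lemma lt_sqrt_sq: "0 < r \<Longrightarrow> r < sqrt s \<Longrightarrow> r\<^sup>2 < s"
  by (metis less_trans power_strict_mono real_sqrt_gt_0_iff real_sqrt_pow2 less_imp_le zero_less_numeral)

lemma a_kernel_nonpos: "s \<le> 0 \<Longrightarrow> a_kernel k r s = 0"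
  using lt_sqrt_sq[of r s] zero_le_power2[of r] by (auto simp: a_kernel_def a1_def a2_def)

lemma a_kernel_rnonpos: "r \<le> 0 \<Longrightarrow> a_kernel k r s = 0"
  by (auto simp: a_kernel_def a1_def a2_def)

lemma a_kernel_nonneg: "0 \<le> a_kernel k r s"
  using lt_sqrt_sq[of r s] by (auto simp: a_kernel_def a1_def a2_def power_strict_mono)

lemma Bk_pos: "0 < s \<Longrightarrow> 0 < Bk k s"
  by (auto simp: Bk_def)

lemma Bk_sq: "k \<in> {1,2} \<Longrightarrow> 0 \<le> s \<Longrightarrow> (Bk k s)\<^sup>2 = s ^ k"
  by (auto simp: Bk_def)

lemma measurable_a_kernel[measurable]:
  assumes [measurable]: "f \<in> borel_measurable M" "g \<in> borel_measurable M"
  shows "(\<lambda>x. a_kernel k (f x) (g x)) \<in> borel_measurable M"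
proof (cases "k = 1")
  case True then show ?thesis unfolding a_kernel_def a1_def by simp measurable
next
  case False then show ?thesis unfolding a_kernel_def a2_def by simp measurable
qed

lemma arcsin_integral:
  assumes B: "0 < B"
  shows "(\<integral>\<^sup>+ r. indicator {0<..} r * ennreal (if 0 < r \<and> r < B then 2/pi * (1/sqrt (B\<^sup>2 - r\<^sup>2)) else 0) \<partial>lborel) = 1"
proof -
  define f where "f r = (if 0 < r \<and> r < B then 1/sqrt (B\<^sup>2 - r\<^sup>2) else 0)" for r
  have der: "((\<lambda>r. arcsin (r / B)) has_vector_derivative f r) (at r)" if r: "r \<in> {0<..<B}" for r
  proof -
    have r1: "-1 < r / B" "r / B < 1" using r B by (auto simp: field_simps)
    have "((\<lambda>r. arcsin (r / B)) has_real_derivative (inverse (sqrt (1 - (r/B)\<^sup>2)) * (1 / B))) (at r)"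
      by (rule DERIV_chain2[where f=arcsin and g="\<lambda>r. r / B", OF DERIV_arcsin[OF r1]]) (use B in \<open>auto intro!: derivative_eq_intros\<close>)
    moreover have "inverse (sqrt (1 - (r/B)\<^sup>2)) * (1 / B) = f r"
    proof -
      have "1 - (r/B)\<^sup>2 = (B\<^sup>2 - r\<^sup>2) / B\<^sup>2" using B by (simp add: field_simps power2_eq_square)
      then have "sqrt (1 - (r/B)\<^sup>2) = sqrt (B\<^sup>2 - r\<^sup>2) / B" using B by (simp add: real_sqrt_divide)
      then show ?thesis using r B by (simp add: f_def divide_simps)
    qed
    ultimately show ?thesis by (simp add: has_real_derivative_iff_has_vector_derivative)
  qed
  have cont: "continuous_on {0..B} (\<lambda>r. arcsin (r / B))"
    using B by (intro continuous_intros) (auto simp: field_simps)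
  have "(f has_integral (arcsin (B / B) - arcsin (0 / B))) {0..B}"
    by (rule fundamental_theorem_of_calculus_interior[OF _ cont der]) (use B in auto)
  then have I: "(f has_integral pi / 2) {0..B}" using B by simp
  have "(\<integral>\<^sup>+ r. indicator {0..B} r * f r \<partial>lborel) = pi / 2"
    by (rule nn_integral_has_integral_lebesgue[OF _ I]) (auto simp: f_def)
  moreover have "(\<integral>\<^sup>+ r. indicator {0<..} r * ennreal (if 0 < r \<and> r < B then 2/pi * (1/sqrt (B\<^sup>2 - r\<^sup>2)) else 0) \<partial>lborel)
      = ennreal (2/pi) * (\<integral>\<^sup>+ r. indicator {0..B} r * f r \<partial>lborel)"
    by (subst nn_integral_cmult[symmetric]) (auto intro!: nn_integral_cong simp: f_def ennreal_mult[symmetric] split: split_indicator)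
  ultimately show ?thesis by (simp add: ennreal_mult[symmetric])
qed

lemma kernel_int_one:
  assumes "k \<in> {1,2}" "0 < s"
  shows "(\<integral>\<^sup>+ r. indicator {0<..} r * ennreal (a_kernel k r s) \<partial>lborel) = 1"
  using arcsin_integral[OF Bk_pos[OF assms(2), of k]] by (simp add: a_kernel_alt[OF assms])

lemma kernel_int_le:
  assumes k: "k \<in> {1,2}" and s: "0 < s"
  shows "(\<integral>\<^sup>+ r. indicator {0<..} r * ennreal (a_kernel k r s) * ennreal (min 1 (r\<^sup>2)) \<partial>lborel) \<le> ennreal (min 1 (s ^ k))"
proof -
  have "(\<integral>\<^sup>+ r. indicator {0<..} r * ennreal (a_kernel k r s) * ennreal (min 1 (r\<^sup>2)) \<partial>lborel)
      \<le> (\<integral>\<^sup>+ r. indicator {0<..} r * ennreal (a_kernel k r s) * ennreal (min 1 (s ^ k)) \<partial>lborel)"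
  proof (intro nn_integral_mono)
    fix r
    show "indicator {0<..} r * ennreal (a_kernel k r s) * ennreal (min 1 (r\<^sup>2)) \<le> indicator {0<..} r * ennreal (a_kernel k r s) * ennreal (min 1 (s ^ k))"
    proof (cases "0 < r \<and> r < Bk k s")
      case True
      then have "r\<^sup>2 \<le> (Bk k s)\<^sup>2" by (intro power_mono) auto
      then have "r\<^sup>2 \<le> s ^ k" using Bk_sq[OF k] s by simp
      then show ?thesis by (intro mult_left_mono ennreal_leI) auto
    next
      case False then show ?thesis by (auto simp: a_kernel_alt[OF k s])
    qed
  qed
  also have "\<dots> = (\<integral>\<^sup>+ r. indicator {0<..} r * ennreal (a_kernel k r s) \<partial>lborel) * ennreal (min 1 (s ^ k))"
    by (rule nn_integral_multc) simp
  also have "\<dots> = ennreal (min 1 (s ^ k))" using kernel_int_one[OF k s] by simp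
  finally show ?thesis .
qed

lemma kernel_lsc:
  fixes f :: "nat \<Rightarrow> real"
  assumes k: "k \<in> {1,2}" and r: "0 < r" and f: "f \<longlonglongrightarrow> r" and c: "0 \<le> c"
  shows "ennreal (a_kernel k r s * c) \<le> liminf (\<lambda>n. ennreal (a_kernel k (f n) s * c))"
proof (cases "0 < s \<and> r < Bk k s")
  case False
  then have "a_kernel k r s = 0"
    by (cases "0 < s") (auto simp: a_kernel_alt[OF k] a_kernel_nonpos)
  then show ?thesis by simp
next
  case True
  then have s: "0 < s" and rB: "r < Bk k s" by auto
  define B where "B = Bk k s"
  define g where "g x = 2/pi * (1/sqrt (B\<^sup>2 - x\<^sup>2)) * c" for x
  have "r\<^sup>2 < B\<^sup>2" using r rB by (intro power_strict_mono) (auto simp: B_def)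
  then have cont: "isCont g r" unfolding g_def by (intro continuous_intros) auto
  have ev: "eventually (\<lambda>n. 0 < f n \<and> f n < B) sequentially"
    using f r rB by (auto simp: B_def intro: order_tendstoD eventually_conj)
  have eq_r: "a_kernel k r s * c = g r" using r rB by (simp add: a_kernel_alt[OF k s] g_def B_def)
  have "(\<lambda>n. ennreal (g (f n))) \<longlonglongrightarrow> ennreal (g r)"
    by (intro tendsto_ennrealI isCont_tendsto_compose[OF cont f])
  then have "(\<lambda>n. ennreal (a_kernel k (f n) s * c)) \<longlonglongrightarrow> ennreal (a_kernel k r s * c)"
    unfolding eq_r
    by (rule Lim_transform_eventually) (use ev in \<open>eventually_elim, simp add: a_kernel_alt[OF k s] g_def B_def\<close>)
  then show ?thesis by (simp add: lim_imp_Liminf)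
qed

definition rho :: "nat \<Rightarrow> real \<Rightarrow> real" where
  "rho k r = (if k = 1 then r\<^sup>2 else r)"

lemma a_kernel_pos_iff:
  assumes k: "k \<in> {1,2}" and r: "0 < r"
  shows "0 < a_kernel k r s \<longleftrightarrow> rho k r < s"
proof (cases "k = 1")
  case True
  have "r < sqrt s \<longleftrightarrow> r\<^sup>2 < s"
    using r lt_sqrt_sq[of r s] by (auto intro: real_less_rsqrt)
  then show ?thesis using True r lt_sqrt_sq[of r s] by (auto simp: a_kernel_def a1_def rho_def)
next
  case False
  then show ?thesis using r by (auto simp: a_kernel_def a2_def rho_def power_strict_mono)
qed

lemma rho_mono: "0 < r \<Longrightarrow> r \<le> r' \<Longrightarrow> rho k r \<le> rho k r'"
  by (auto simp: rho_def power_mono)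

lemma rho_strict_mono: "0 < r \<Longrightarrow> r < r' \<Longrightarrow> rho k r < rho k r'"
  by (auto simp: rho_def power_strict_mono)

lemma rho_pos: "0 < r \<Longrightarrow> 0 < rho k r"
  by (auto simp: rho_def)

lemma rho_surj: "0 < c \<Longrightarrow> \<exists>r>0. rho k r = c"
proof (cases "k = 1")
  case True assume "0 < c" then show ?thesis using True by (auto simp: rho_def intro!: exI[of _ "sqrt c"])
next
  case False assume "0 < c" then show ?thesis using False by (auto simp: rho_def intro!: exI[of _ c])
qed




lemma A_op_eq:
  fixes nu :: "'a::euclidean_space measure"
  assumes sets_nu[measurable_cong]: "sets nu = sets borel"
  shows "A_op k nu = distr (density (nu \<Otimes>\<^sub>M lborel)
     (\<lambda>(x, r). indicator (UNIV - {0}) x * indicator {0<..} r * ennreal (a_kernel k r (norm x))))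
     borel (\<lambda>(x, r). (r / norm x) *\<^sub>R x)" (is "_ = ?M")
proof -
  let ?H = "\<lambda>(x::'a, r::real). indicator (UNIV - {0}) x * indicator {0<..} r * ennreal (a_kernel k r (norm x))"
  have Hm[measurable]: "?H \<in> borel_measurable (nu \<Otimes>\<^sub>M lborel)" by measurable
  have phim[measurable]: "(\<lambda>(x::'a, r::real). (r / norm x) *\<^sub>R x) \<in> (nu \<Otimes>\<^sub>M lborel) \<rightarrow>\<^sub>M borel" by measurable
  have eq: "A_fun k nu B = emeasure ?M B" if B[measurable]: "B \<in> sets borel" for B
  proof -
    have "emeasure ?M B = (\<integral>\<^sup>+ p. indicator B p \<partial>?M)" using B by (subst nn_integral_indicator) auto
    also have "\<dots> = (\<integral>\<^sup>+ p. indicator B ((\<lambda>(x, r). (r / norm x) *\<^sub>R x) p) \<partial>density (nu \<Otimes>\<^sub>M lborel) ?H)"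
      by (subst nn_integral_distr) auto
    also have "\<dots> = (\<integral>\<^sup>+ p. ?H p * indicator B ((\<lambda>(x, r). (r / norm x) *\<^sub>R x) p) \<partial>(nu \<Otimes>\<^sub>M lborel))"
      by (subst nn_integral_density) auto
    also have "\<dots> = (\<integral>\<^sup>+ x. \<integral>\<^sup>+ r. ?H (x, r) * indicator B ((r / norm x) *\<^sub>R x) \<partial>lborel \<partial>nu)"
      using lborel.nn_integral_fst[of "\<lambda>p. ?H p * indicator B ((\<lambda>(x, r). (r / norm x) *\<^sub>R x) p)" nu] by simp
    also have "\<dots> = A_fun k nu B"
      unfolding A_fun_def
      by (intro nn_integral_cong) (auto simp: nn_integral_cmult[symmetric] mult.assoc intro!: nn_integral_cong)
    finally show ?thesis ..
  qed
  have "A_op k nu = measure_of UNIV (sets borel) (emeasure ?M)"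
    unfolding A_op_def
    by (rule measure_of_eq) (auto simp: eq sets.sigma_sets_eq[of borel, simplified])
  also have "\<dots> = measure_of (space ?M) (sets ?M) (emeasure ?M)" by simp
  also have "\<dots> = ?M" by (rule measure_of_of_measure)
  finally show ?thesis .
qed

lemma A_op_nn_integral:
  fixes nu :: "'a::euclidean_space measure"
  assumes sets_nu[measurable_cong]: "sets nu = sets borel" and g[measurable]: "g \<in> borel_measurable borel"
  shows "(\<integral>\<^sup>+ y. g y \<partial>A_op k nu) = (\<integral>\<^sup>+ x. indicator (UNIV - {0}) x *
      (\<integral>\<^sup>+ r. indicator {0<..} r * ennreal (a_kernel k r (norm x)) * g ((r / norm x) *\<^sub>R x) \<partial>lborel) \<partial>nu)"
proof -
  let ?H = "\<lambda>(x::'a, r::real). indicator (UNIV - {0}) x * indicator {0<..} r * ennreal (a_kernel k r (norm x))"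
  have "(\<integral>\<^sup>+ y. g y \<partial>A_op k nu) = (\<integral>\<^sup>+ p. ?H p * g ((\<lambda>(x, r). (r / norm x) *\<^sub>R x) p) \<partial>(nu \<Otimes>\<^sub>M lborel))"
    unfolding A_op_eq[OF sets_nu] by (subst nn_integral_distr) (auto simp: nn_integral_density)
  also have "\<dots> = (\<integral>\<^sup>+ x. \<integral>\<^sup>+ r. ?H (x, r) * g ((r / norm x) *\<^sub>R x) \<partial>lborel \<partial>nu)"
    using lborel.nn_integral_fst[of "\<lambda>p. ?H p * g ((\<lambda>(x, r). (r / norm x) *\<^sub>R x) p)" nu] by simp
  also have "\<dots> = (\<integral>\<^sup>+ x. indicator (UNIV - {0}) x *
      (\<integral>\<^sup>+ r. indicator {0<..} r * ennreal (a_kernel k r (norm x)) * g ((r / norm x) *\<^sub>R x) \<partial>lborel) \<partial>nu)"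
    by (intro nn_integral_cong) (auto simp: nn_integral_cmult[symmetric] mult.assoc intro!: nn_integral_cong)
  finally show ?thesis .
qed




theorem proposition2p11:
  fixes nu :: "'a::euclidean_space measure" and k :: nat
  assumes "k \<in> {1, 2}" and "levy_measure_k k nu"
  shows "levy_measure (A_op k nu) \<and>
    (\<exists>(lam :: 'a measure) (ell :: 'a \<Rightarrow> real \<Rightarrow> ennreal) (b :: 'a \<Rightarrow> ereal).
      polar_decomposition (A_op k nu) lam (\<lambda>\<xi>. density (restrict_space lborel {0<..}) (ell \<xi>)) \<and>
      (\<lambda>p. ell (fst p) (snd p)) \<in> borel_measurable
          (restrict_space borel unit_sphere \<Otimes>\<^sub>M restrict_space borel {0<..}) \<and>
      (\<forall>\<xi>\<in>unit_sphere. \<forall>r>0. lsc_at_point (ell \<xi>) r) \<and>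
      (\<forall>\<xi>\<in>unit_sphere. 0 < b \<xi> \<and>
         (\<forall>r>0. ereal r < b \<xi> \<longrightarrow> ell \<xi> r > 0) \<and>
         (b \<xi> < \<infinity> \<longrightarrow> (\<forall>r>0. ereal r \<ge> b \<xi> \<longrightarrow> ell \<xi> r = 0))))"
proof -
  have k: "k \<in> {1,2}" by fact
  from assms(2) have sets_nu[measurable_cong]: "sets nu = sets borel"
    and fin_nu: "(\<integral>\<^sup>+ x. ennreal (min 1 (norm x ^ k)) \<partial>nu) < \<infinity>"
    by (auto simp: levy_measure_k_def)
  have space_nu: "space nu = UNIV" using sets_eq_imp_space_eq[OF sets_nu] by simp
  obtain \<xi>0 :: 'a where \<xi>0: "norm \<xi>0 = 1"
    using norm_Basis[of "SOME b. b \<in> Basis"] someI_ex[of "\<lambda>b. b \<in> (Basis :: 'a set)"] nonempty_Basis by blast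
  define pol where "pol x = (if x = 0 then \<xi>0 else (1 / norm x) *\<^sub>R x)" for x :: 'a
  define w where "w s = min 1 (s ^ k)" for s :: real
  define wt where "wt x = (if x = 0 then 0 else w (norm x))" for x :: 'a
  define nu' where "nu' = density nu (\<lambda>x. ennreal (wt x))"
  define X where "X = restrict_space (borel :: 'a measure) (sphere 0 1)"
  define \<mu> where "\<mu> = distr nu' (X \<Otimes>\<^sub>M borel) (\<lambda>x. (pol x, norm x))"
  have space_X: "space X = sphere 0 1" by (simp add: X_def)
  have w_pos: "0 < w s" if "0 < s" for s using that by (simp add: w_def)
  have w_meas[measurable]: "w \<in> borel_measurable borel" unfolding w_def by measurable
  have wt_meas[measurable]: "wt \<in> borel_measurable borel" unfolding wt_def by measurable
  have pol_sphere: "pol x \<in> sphere 0 1" for x using \<xi>0 by (auto simp: pol_def)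
  have pol_meas[measurable]: "pol \<in> borel \<rightarrow>\<^sub>M X"
  proof -
    have "pol \<in> borel_measurable borel" unfolding pol_def by measurable
    then show ?thesis unfolding X_def by (rule measurable_restrict_space2[rotated]) (use pol_sphere in auto)
  qed
  have pnm[measurable]: "(\<lambda>x. (pol x, norm x)) \<in> nu' \<rightarrow>\<^sub>M X \<Otimes>\<^sub>M borel"
    by (simp add: nu'_def measurable_cong_sets[OF sets_nu refl])
  have sets_\<mu>: "sets \<mu> = sets (X \<Otimes>\<^sub>M borel)" by (simp add: \<mu>_def)
  have wt_le: "ennreal (wt x) \<le> ennreal (min 1 (norm x ^ k))" for x
    by (auto simp: wt_def w_def intro!: ennreal_leI)
  have fin_\<mu>: "finite_measure \<mu>"
  proof (rule finite_measureI)
    have "emeasure \<mu> (space \<mu>) = emeasure nu' (space nu')"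
    proof -
      have "(\<lambda>x. (pol x, norm x)) -` space (X \<Otimes>\<^sub>M borel) \<inter> space nu' = space nu'"
        using pol_sphere by (auto simp: space_pair_measure space_X)
      then show ?thesis unfolding \<mu>_def by (subst emeasure_distr) auto
    qed
    also have "\<dots> = (\<integral>\<^sup>+ x. ennreal (wt x) \<partial>nu)"
      unfolding nu'_def by (subst emeasure_density) (auto intro!: nn_integral_cong simp: space_nu)
    also have "\<dots> \<le> (\<integral>\<^sup>+ x. ennreal (min 1 (norm x ^ k)) \<partial>nu)" by (intro nn_integral_mono wt_le)
    finally show "emeasure \<mu> (space \<mu>) \<noteq> \<infinity>" using fin_nu by (auto simp: top_unique)
  qed
  obtain K where K: "K \<in> X \<rightarrow>\<^sub>M prob_algebra borel"
    and \<mu>eq: "\<mu> = distr \<mu> X fst \<bind> (\<lambda>x. distr (K x) (X \<Otimes>\<^sub>M borel) (Pair x))"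
    using disintegration[OF sets_\<mu> fin_\<mu>] by blast
  define lam where "lam = distr \<mu> X fst"
  have sets_lam: "sets lam = sets X" and space_lam: "space lam = sphere 0 1"
    by (auto simp: lam_def space_X)
  have Ksub[measurable]: "K \<in> X \<rightarrow>\<^sub>M subprob_algebra borel" using K by (rule measurable_prob_algebraD)
  have K_space: "sets (K \<xi>) = sets borel \<and> prob_space (K \<xi>)" if "\<xi> \<in> space X" for \<xi>
    using measurable_space[OF K that] by (simp add: space_prob_algebra)
  have Kd_meas: "(\<lambda>x. distr (K x) (X \<Otimes>\<^sub>M borel) (Pair x)) \<in> X \<rightarrow>\<^sub>M subprob_algebra (X \<Otimes>\<^sub>M borel)"
    by (rule measurable_distr2[where f="\<lambda>x y. (x, y)"]) (auto intro: Ksub)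
  have KI: "(\<integral>\<^sup>+ p. G p \<partial>\<mu>) = (\<integral>\<^sup>+ \<xi>. \<integral>\<^sup>+ s. G (\<xi>, s) \<partial>K \<xi> \<partial>lam)"
    if G[measurable]: "G \<in> borel_measurable (X \<Otimes>\<^sub>M borel)" for G
  proof -
    have "(\<integral>\<^sup>+ p. G p \<partial>\<mu>) = (\<integral>\<^sup>+ \<xi>. \<integral>\<^sup>+ p. G p \<partial>distr (K \<xi>) (X \<Otimes>\<^sub>M borel) (Pair \<xi>) \<partial>lam)"
      unfolding lam_def
      by (subst \<mu>eq) (rule nn_integral_bind[OF G], simp add: measurable_cong_sets[OF sets_lam[unfolded lam_def] refl] Kd_meas)
    also have "\<dots> = (\<integral>\<^sup>+ \<xi>. \<integral>\<^sup>+ s. G (\<xi>, s) \<partial>K \<xi> \<partial>lam)"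
    proof (intro nn_integral_cong)
      fix \<xi> assume "\<xi> \<in> space lam"
      then have \<xi>: "\<xi> \<in> space X" by (simp add: space_lam space_X)
      show "(\<integral>\<^sup>+ p. G p \<partial>distr (K \<xi>) (X \<Otimes>\<^sub>M borel) (Pair \<xi>)) = (\<integral>\<^sup>+ s. G (\<xi>, s) \<partial>K \<xi>)"
        using K_space[OF \<xi>] \<xi> by (subst nn_integral_distr) (auto simp: measurable_cong_sets[of "K \<xi>" borel] )
    qed
    finally show ?thesis .
  qed
  have AE_K0: "AE \<xi> in lam. emeasure (K \<xi>) {..0} = 0"
  proof -
    have "(\<integral>\<^sup>+ \<xi>. emeasure (K \<xi>) {..0} \<partial>lam) = (\<integral>\<^sup>+ \<xi>. \<integral>\<^sup>+ s. indicator (space X \<times> {..0}) (\<xi>, s) \<partial>K \<xi> \<partial>lam)"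
    proof (intro nn_integral_cong)
      fix \<xi> assume "\<xi> \<in> space lam"
      then have \<xi>: "\<xi> \<in> space X" by (simp add: space_lam space_X)
      have "(\<integral>\<^sup>+ s. indicator (space X \<times> {..0}) (\<xi>, s) \<partial>K \<xi>) = (\<integral>\<^sup>+ s. indicator {..0::real} s \<partial>K \<xi>)"
        using \<xi> by (intro nn_integral_cong) (simp add: indicator_def)
      also have "\<dots> = emeasure (K \<xi>) {..0}"
        using K_space[OF \<xi>] by (intro nn_integral_indicator) simp
      finally show "emeasure (K \<xi>) {..0} = (\<integral>\<^sup>+ s. indicator (space X \<times> {..0}) (\<xi>, s) \<partial>K \<xi>)" ..
    qed
    also have "\<dots> = (\<integral>\<^sup>+ p. indicator (space X \<times> {..0}) p \<partial>\<mu>)"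
      by (rule KI[symmetric]) (intro borel_measurable_indicator pair_measureI, auto)
    also have "\<dots> = (\<integral>\<^sup>+ x. indicator (space X \<times> {..0}) (pol x, norm x) \<partial>nu')"
      unfolding \<mu>_def by (subst nn_integral_distr) auto
    also have "\<dots> = (\<integral>\<^sup>+ x. ennreal (wt x) * indicator (space X \<times> {..0}) (pol x, norm x) \<partial>nu)"
      unfolding nu'_def by (subst nn_integral_density) auto
    also have "\<dots> = (\<integral>\<^sup>+ x. 0 \<partial>nu)"
      by (intro nn_integral_cong) (auto simp: wt_def indicator_def space_X pol_sphere)
    finally have "(\<integral>\<^sup>+ \<xi>. emeasure (K \<xi>) {..0} \<partial>lam) = 0" by simp
    then show ?thesis
      by (subst (asm) nn_integral_0_iff_AE) (auto simp: measurable_cong_sets[OF sets_lam refl])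
  qed
  define K' where "K' \<xi> = (if emeasure (K \<xi>) {..0} = 0 then K \<xi> else return borel 1)" for \<xi>
  have K'_meas: "K' \<in> X \<rightarrow>\<^sub>M prob_algebra borel"
    unfolding K'_def
  proof (rule measurable_If)
    show "K \<in> X \<rightarrow>\<^sub>M prob_algebra borel" by (rule K)
    show "(\<lambda>x. return borel (1::real)) \<in> X \<rightarrow>\<^sub>M prob_algebra borel"
      by (rule measurable_const) (auto simp: space_prob_algebra prob_space_return)
    show "{x \<in> space X. emeasure (K x) {..0} = 0} \<in> sets X" by measurable
  qed
  have K'sub[measurable]: "K' \<in> X \<rightarrow>\<^sub>M subprob_algebra borel" using K'_meas by (rule measurable_prob_algebraD)
  have K'_space: "sets (K' \<xi>) = sets borel" "prob_space (K' \<xi>)" "emeasure (K' \<xi>) {..0} = 0" if "\<xi> \<in> sphere 0 1" for \<xi>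
    using K_space[of \<xi>] that by (auto simp: K'_def space_X prob_space_return)
  have AE_K': "AE \<xi> in lam. K' \<xi> = K \<xi>"
    using AE_K0 by eventually_elim (simp add: K'_def)
  have KI': "(\<integral>\<^sup>+ p. G p \<partial>\<mu>) = (\<integral>\<^sup>+ \<xi>. \<integral>\<^sup>+ s. G (\<xi>, s) \<partial>K' \<xi> \<partial>lam)"
    if G[measurable]: "G \<in> borel_measurable (X \<Otimes>\<^sub>M borel)" for G
    unfolding KI[OF G] using AE_K' by (intro nn_integral_cong_AE) (auto elim!: eventually_mono)
  define h where "h r s = ennreal (a_kernel k r s * (1 / w s))" for r s
  have h_meas[measurable]: "(\<lambda>x. h (f x) (g x)) \<in> borel_measurable M"
    if [measurable]: "f \<in> borel_measurable M" "g \<in> borel_measurable M" for f g and M :: "'z measure"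
    unfolding h_def by measurable
  define ell where "ell \<xi> r = (\<integral>\<^sup>+ s. h r s \<partial>K' \<xi>)" for \<xi> r
  have ell_meas[measurable]: "(\<lambda>p. ell (fst p) (snd p)) \<in> borel_measurable (X \<Otimes>\<^sub>M borel)"
  proof -
    have "(\<lambda>p. integral\<^sup>N (K' (fst p)) (\<lambda>s. h (snd p) s)) \<in> borel_measurable (X \<Otimes>\<^sub>M borel)"
      by (rule nn_integral_measurable_subprob_algebra2[where N=borel]) measurable
    then show ?thesis by (simp add: ell_def)
  qed
  have Xb[measurable]: "(\<lambda>x. x) \<in> X \<rightarrow>\<^sub>M borel" unfolding X_def by (rule measurable_restrict_space1) simp
  have M1: "(\<integral>\<^sup>+ x. indicator (UNIV - {0}) x * (\<integral>\<^sup>+ r. indicator {0<..} r * ennreal (a_kernel k r (norm x)) * g ((r / norm x) *\<^sub>R x) \<partial>lborel) \<partial>nu)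
     = (\<integral>\<^sup>+ \<xi>. (\<integral>\<^sup>+ r. indicator {0<..} r * ell \<xi> r * g (r *\<^sub>R \<xi>) \<partial>lborel) \<partial>lam)"
    if g[measurable]: "g \<in> borel_measurable borel" for g :: "'a \<Rightarrow> ennreal"
  proof -
    define Gg where "Gg p = (\<integral>\<^sup>+ r. indicator {0<..} r * h r (snd p) * g (r *\<^sub>R fst p) \<partial>lborel)" for p :: "'a \<times> real"
    have Gg_meas[measurable]: "Gg \<in> borel_measurable (X \<Otimes>\<^sub>M borel)"
      unfolding Gg_def by (rule lborel.borel_measurable_nn_integral[where f="\<lambda>p r. indicator {0<..} r * h r (snd p) * g (r *\<^sub>R fst p)", simplified]) measurable
    have "(\<integral>\<^sup>+ x. indicator (UNIV - {0}) x * (\<integral>\<^sup>+ r. indicator {0<..} r * ennreal (a_kernel k r (norm x)) * g ((r / norm x) *\<^sub>R x) \<partial>lborel) \<partial>nu)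
        = (\<integral>\<^sup>+ x. ennreal (wt x) * Gg (pol x, norm x) \<partial>nu)"
    proof (intro nn_integral_cong)
      fix x :: 'a
      show "indicator (UNIV - {0}) x * (\<integral>\<^sup>+ r. indicator {0<..} r * ennreal (a_kernel k r (norm x)) * g ((r / norm x) *\<^sub>R x) \<partial>lborel)
        = ennreal (wt x) * Gg (pol x, norm x)"
      proof (cases "x = 0")
        case True then show ?thesis by (simp add: wt_def)
      next
        case False
        have wx: "wt x = w (norm x)" "0 < w (norm x)" using False w_pos[of "norm x"] by (auto simp: wt_def)
        have "ennreal (wt x) * Gg (pol x, norm x) =
            (\<integral>\<^sup>+ r. ennreal (wt x) * (indicator {0<..} r * h r (norm x) * g (r *\<^sub>R pol x)) \<partial>lborel)"
          unfolding Gg_def by (subst nn_integral_cmult) auto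
        also have "\<dots> = (\<integral>\<^sup>+ r. indicator {0<..} r * ennreal (a_kernel k r (norm x)) * g ((r / norm x) *\<^sub>R x) \<partial>lborel)"
        proof (intro nn_integral_cong)
          fix r :: real
          have e1: "ennreal (wt x) * h r (norm x) = ennreal (a_kernel k r (norm x))"
            unfolding h_def wx(1) using wx(2) a_kernel_nonneg[of k r "norm x"]
            by (subst ennreal_mult[symmetric]) auto
          have e2: "r *\<^sub>R pol x = (r / norm x) *\<^sub>R x" using False by (simp add: pol_def)
          show "ennreal (wt x) * (indicator {0<..} r * h r (norm x) * g (r *\<^sub>R pol x)) =
              indicator {0<..} r * ennreal (a_kernel k r (norm x)) * g ((r / norm x) *\<^sub>R x)"
            by (simp only: e1[symmetric] e2[symmetric] ac_simps)
        qed
        finally show ?thesis using False by simp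
      qed
    qed
    also have "\<dots> = (\<integral>\<^sup>+ x. Gg (pol x, norm x) \<partial>nu')"
    proof -
      have "(\<lambda>x. Gg (pol x, norm x)) \<in> borel_measurable nu"
        using measurable_compose[OF pnm Gg_meas] by (simp add: nu'_def measurable_cong_sets[OF sets_nu refl])
      moreover have "(\<lambda>x. ennreal (wt x)) \<in> borel_measurable nu"
        by (simp add: measurable_cong_sets[OF sets_nu refl])
      ultimately show ?thesis unfolding nu'_def by (subst nn_integral_density) auto
    qed
    also have "\<dots> = (\<integral>\<^sup>+ p. Gg p \<partial>\<mu>)"
      unfolding \<mu>_def by (subst nn_integral_distr) auto
    also have "\<dots> = (\<integral>\<^sup>+ \<xi>. \<integral>\<^sup>+ s. Gg (\<xi>, s) \<partial>K' \<xi> \<partial>lam)"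
      by (rule KI'[OF Gg_meas])
    also have "\<dots> = (\<integral>\<^sup>+ \<xi>. (\<integral>\<^sup>+ r. indicator {0<..} r * ell \<xi> r * g (r *\<^sub>R \<xi>) \<partial>lborel) \<partial>lam)"
    proof (intro nn_integral_cong)
      fix \<xi> assume "\<xi> \<in> space lam"
      then have \<xi>: "\<xi> \<in> sphere 0 1" by (simp add: space_lam)
      have psf: "pair_sigma_finite (K' \<xi>) lborel"
        unfolding pair_sigma_finite_def
        using prob_space_imp_sigma_finite[OF K'_space(2)[OF \<xi>]] lborel.sigma_finite_measure_axioms by auto
      have sets_p: "sets (K' \<xi> \<Otimes>\<^sub>M lborel) = sets (borel \<Otimes>\<^sub>M (borel :: real measure))"
        by (rule sets_pair_measure_cong) (simp_all add: K'_space(1)[OF \<xi>])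
      have fm: "(\<lambda>(s, r). indicator {0<..} r * h r s * g (r *\<^sub>R \<xi>)) \<in> borel_measurable (K' \<xi> \<Otimes>\<^sub>M lborel)"
        unfolding measurable_cong_sets[OF sets_p refl] by measurable
      have "(\<integral>\<^sup>+ s. Gg (\<xi>, s) \<partial>K' \<xi>) = (\<integral>\<^sup>+ s. \<integral>\<^sup>+ r. indicator {0<..} r * h r s * g (r *\<^sub>R \<xi>) \<partial>lborel \<partial>K' \<xi>)"
        by (simp add: Gg_def)
      also have "\<dots> = (\<integral>\<^sup>+ r. \<integral>\<^sup>+ s. indicator {0<..} r * h r s * g (r *\<^sub>R \<xi>) \<partial>K' \<xi> \<partial>lborel)"
        using pair_sigma_finite.Fubini'[OF psf fm] by simp
      also have "\<dots> = (\<integral>\<^sup>+ r. indicator {0<..} r * ell \<xi> r * g (r *\<^sub>R \<xi>) \<partial>lborel)"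
      proof (intro nn_integral_cong)
        fix r :: real
        have hm: "(\<lambda>s. h r s) \<in> borel_measurable (K' \<xi>)"
          unfolding measurable_cong_sets[OF K'_space(1)[OF \<xi>] refl] by measurable
        have "(\<integral>\<^sup>+ s. indicator {0<..} r * h r s * g (r *\<^sub>R \<xi>) \<partial>K' \<xi>) = (\<integral>\<^sup>+ s. (indicator {0<..} r * g (r *\<^sub>R \<xi>)) * h r s \<partial>K' \<xi>)"
          by (intro nn_integral_cong) (simp only: ac_simps)
        also have "\<dots> = (indicator {0<..} r * g (r *\<^sub>R \<xi>)) * ell \<xi> r"
          unfolding ell_def by (rule nn_integral_cmult[OF hm])
        finally show "(\<integral>\<^sup>+ s. indicator {0<..} r * h r s * g (r *\<^sub>R \<xi>) \<partial>K' \<xi>) = indicator {0<..} r * ell \<xi> r * g (r *\<^sub>R \<xi>)"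
          by (simp only: ac_simps)
      qed
      finally show "(\<integral>\<^sup>+ s. Gg (\<xi>, s) \<partial>K' \<xi>) = (\<integral>\<^sup>+ r. indicator {0<..} r * ell \<xi> r * g (r *\<^sub>R \<xi>) \<partial>lborel)" .
    qed
    finally show ?thesis .
  qed
  have h_zero_iff: "h r s = 0 \<longleftrightarrow> \<not> rho k r < s" if r: "0 < r" for r s
  proof
    assume "h r s = 0"
    show "\<not> rho k r < s"
    proof
      assume rs: "rho k r < s"
      then have s: "0 < s" using rho_pos[OF r, of k] by linarith
      have "0 < a_kernel k r s" using a_kernel_pos_iff[OF k r] rs by simp
      then have "0 < a_kernel k r s * (1 / w s)" using w_pos[OF s] by simp
      then have "0 < h r s" unfolding h_def by (simp only: ennreal_less_zero_iff)
      then show False using \<open>h r s = 0\<close> by simp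
    qed
  next
    assume "\<not> rho k r < s"
    then have "a_kernel k r s = 0" using a_kernel_pos_iff[OF k r, of s] a_kernel_nonneg[of k r s] by linarith
    then show "h r s = 0" by (simp add: h_def)
  qed
  have ell_pos_iff: "0 < ell \<xi> r \<longleftrightarrow> 0 < emeasure (K' \<xi>) {rho k r<..}" if \<xi>: "\<xi> \<in> sphere 0 1" and r: "0 < r" for \<xi> r
  proof -
    have hm: "(\<lambda>s. h r s) \<in> borel_measurable (K' \<xi>)"
      unfolding measurable_cong_sets[OF K'_space(1)[OF \<xi>] refl] by measurable
    have set: "{rho k r<..} \<in> sets (K' \<xi>)" using K'_space(1)[OF \<xi>] by simp
    have "ell \<xi> r = 0 \<longleftrightarrow> (AE s in K' \<xi>. h r s = 0)"
      unfolding ell_def by (rule nn_integral_0_iff_AE[OF hm])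
    also have "\<dots> \<longleftrightarrow> (AE s in K' \<xi>. s \<notin> {rho k r<..})"
      by (intro AE_cong) (simp add: h_zero_iff[OF r])
    also have "\<dots> \<longleftrightarrow> {rho k r<..} \<in> null_sets (K' \<xi>)"
      by (rule AE_iff_null_sets[symmetric, OF set])
    also have "\<dots> \<longleftrightarrow> emeasure (K' \<xi>) {rho k r<..} = 0"
      using set by (simp add: null_sets_def)
    finally show ?thesis by (simp add: zero_less_iff_neq_zero)
  qed
  have ell_ex: "\<exists>r>0. 0 < ell \<xi> r" if \<xi>: "\<xi> \<in> sphere 0 1" for \<xi>
  proof -
    have sets_K\<xi>: "sets (K' \<xi>) = sets borel" by (rule K'_space(1)[OF \<xi>])
    have "1 = emeasure (K' \<xi>) UNIV"
      using prob_space.emeasure_space_1[OF K'_space(2)[OF \<xi>]] sets_eq_imp_space_eq[OF sets_K\<xi>] by simp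
    also have "UNIV = {..0} \<union> {(0::real)<..}" by auto
    also have "emeasure (K' \<xi>) \<dots> \<le> emeasure (K' \<xi>) {..0} + emeasure (K' \<xi>) {0<..}"
      by (rule emeasure_subadditive) (simp_all add: sets_K\<xi>)
    finally have pos: "0 < emeasure (K' \<xi>) {0<..}" using K'_space(3)[OF \<xi>] by (auto simp: zero_less_iff_neq_zero)
    have "(\<Union>n. {1 / real (Suc n)<..}) = {0::real<..}"
    proof safe
      fix x :: real assume "0 < x"
      then obtain n where "inverse (real (Suc n)) < x" using reals_Archimedean by blast
      then have "1 / real (Suc n) < x" by (simp add: inverse_eq_divide)
      then show "x \<in> (\<Union>n. {1 / real (Suc n)<..})" by (intro UN_I[where a=n]) auto
    next
      fix x :: real and n assume "1 / real (Suc n) < x"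
      moreover have "0 < 1 / real (Suc n)" by simp
      ultimately show "0 < x" by linarith
    qed
    moreover have "incseq (\<lambda>n. {1 / real (Suc n)<..})"
      unfolding incseq_def
    proof (intro allI impI subsetI)
      fix m n :: nat and x :: real assume "m \<le> n" "x \<in> {1 / real (Suc m)<..}"
      moreover have "1 / real (Suc n) \<le> 1 / real (Suc m)" using \<open>m \<le> n\<close> by (intro divide_left_mono) auto
      ultimately show "x \<in> {1 / real (Suc n)<..}" by auto
    qed
    ultimately have eq: "(SUP n. emeasure (K' \<xi>) {1 / real (Suc n)<..}) = emeasure (K' \<xi>) {0<..}"
      by (subst SUP_emeasure_incseq) (auto simp: sets_K\<xi>)
    have "0 < (SUP n. emeasure (K' \<xi>) {1 / real (Suc n)<..})" using pos by (simp only: eq)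
    then obtain n where n: "0 < emeasure (K' \<xi>) {1 / real (Suc n)<..}"
      by (auto simp: less_SUP_iff)
    obtain r where r: "0 < r" "rho k r = 1 / real (Suc n)" using rho_surj[of "1 / real (Suc n)" k] by auto
    show ?thesis using n r ell_pos_iff[OF \<xi> r(1)] by auto
  qed
  have ell_down: "0 < ell \<xi> r'" if \<xi>: "\<xi> \<in> sphere 0 1" and r': "0 < r'" "r' \<le> r" and pos: "0 < ell \<xi> r" for \<xi> r r'
  proof -
    have r: "0 < r" using r' by linarith
    have "emeasure (K' \<xi>) {rho k r<..} \<le> emeasure (K' \<xi>) {rho k r'<..}"
      using rho_mono[OF r'] K'_space(1)[OF \<xi>] by (intro emeasure_mono) auto
    then show ?thesis using pos ell_pos_iff[OF \<xi> r] ell_pos_iff[OF \<xi> r'(1)] by auto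
  qed
  have ell_open: "\<exists>r'>r. 0 < ell \<xi> r'" if \<xi>: "\<xi> \<in> sphere 0 1" and r: "0 < r" and pos: "0 < ell \<xi> r" for \<xi> r
  proof -
    have sets_K\<xi>: "sets (K' \<xi>) = sets borel" by (rule K'_space(1)[OF \<xi>])
    have "(\<Union>n. {rho k r + 1 / real (Suc n)<..}) = {rho k r<..}"
    proof safe
      fix x :: real assume "rho k r < x"
      then have "0 < x - rho k r" by simp
      then obtain n where "inverse (real (Suc n)) < x - rho k r" using reals_Archimedean by blast
      then have "1 / real (Suc n) < x - rho k r" by (simp add: inverse_eq_divide)
      then show "x \<in> (\<Union>n. {rho k r + 1 / real (Suc n)<..})" by (intro UN_I[where a=n]) auto
    next
      fix x :: real and n assume "rho k r + 1 / real (Suc n) < x"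
      moreover have "0 < 1 / real (Suc n)" by simp
      ultimately show "rho k r < x" by linarith
    qed
    moreover have "incseq (\<lambda>n. {rho k r + 1 / real (Suc n)<..})"
      unfolding incseq_def
    proof (intro allI impI subsetI)
      fix m n :: nat and x :: real assume "m \<le> n" "x \<in> {rho k r + 1 / real (Suc m)<..}"
      moreover have "1 / real (Suc n) \<le> 1 / real (Suc m)" using \<open>m \<le> n\<close> by (intro divide_left_mono) auto
      ultimately show "x \<in> {rho k r + 1 / real (Suc n)<..}" by auto
    qed
    ultimately have eq: "(SUP n. emeasure (K' \<xi>) {rho k r + 1 / real (Suc n)<..}) = emeasure (K' \<xi>) {rho k r<..}"
      by (subst SUP_emeasure_incseq) (auto simp: sets_K\<xi>)
    have "0 < emeasure (K' \<xi>) {rho k r<..}" using pos ell_pos_iff[OF \<xi> r] by simp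
    then have "0 < (SUP n. emeasure (K' \<xi>) {rho k r + 1 / real (Suc n)<..})" by (simp only: eq)
    then obtain n where n: "0 < emeasure (K' \<xi>) {rho k r + 1 / real (Suc n)<..}"
      by (auto simp: less_SUP_iff)
    have "0 < rho k r + 1 / real (Suc n)" using rho_pos[OF r, of k] by (simp add: add_pos_pos)
    then obtain r' where r': "0 < r'" "rho k r' = rho k r + 1 / real (Suc n)" using rho_surj by blast
    have "r < r'"
    proof (rule ccontr)
      assume "\<not> r < r'"
      then have "rho k r' \<le> rho k r" using rho_mono[OF r'(1)] by simp
      then show False using r'(2) by simp
    qed
    then show ?thesis using n r' ell_pos_iff[OF \<xi> r'(1)] by auto
  qed
  have ell_lsc: "lsc_at_point (ell \<xi>) r" if \<xi>: "\<xi> \<in> sphere 0 1" and r: "0 < r" for \<xi> r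
    unfolding lsc_at_point_def
  proof (intro allI impI)
    fix c assume c: "c < ell \<xi> r"
    show "eventually (\<lambda>s. c < ell \<xi> s) (at r)"
    proof (rule sequentially_imp_eventually_at, intro allI impI)
      fix f :: "nat \<Rightarrow> real" assume f: "(\<forall>n. f n \<noteq> r) \<and> f \<longlonglongrightarrow> r"
      have hm: "(\<lambda>s. h r' s) \<in> borel_measurable (K' \<xi>)" for r'
        unfolding measurable_cong_sets[OF K'_space(1)[OF \<xi>] refl] by measurable
      have "ell \<xi> r \<le> (\<integral>\<^sup>+ s. liminf (\<lambda>n. h (f n) s) \<partial>K' \<xi>)"
        unfolding ell_def
      proof (intro nn_integral_mono)
        fix s
        show "h r s \<le> liminf (\<lambda>n. h (f n) s)"
        proof (cases "0 < s")
          case True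
          then show ?thesis unfolding h_def using f w_pos[OF True]
            by (intro kernel_lsc[OF k r]) auto
        next
          case False
          then show ?thesis by (simp add: h_def a_kernel_nonpos)
        qed
      qed
      also have "\<dots> \<le> liminf (\<lambda>n. ell \<xi> (f n))"
        unfolding ell_def by (rule nn_integral_liminf) (rule hm)
      finally have "c < liminf (\<lambda>n. ell \<xi> (f n))" using c by simp
      then show "eventually (\<lambda>n. c < ell \<xi> (f n)) sequentially" by (rule less_LiminfD)
    qed
  qed
  have sets_A: "sets (A_op k nu) = sets borel" by (simp add: A_op_eq[OF sets_nu])
  have A_int: "(\<integral>\<^sup>+ y. indicator B y \<partial>A_op k nu) = emeasure (A_op k nu) B" if "B \<in> sets borel" for B
    using that by (intro nn_integral_indicator) (simp add: sets_A)
  have A0: "emeasure (A_op k nu) {0} = 0"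
  proof -
    have "emeasure (A_op k nu) {0} = (\<integral>\<^sup>+ x. indicator (UNIV - {0}) x *
      (\<integral>\<^sup>+ r. indicator {0<..} r * ennreal (a_kernel k r (norm x)) * indicator {0} ((r / norm x) *\<^sub>R x) \<partial>lborel) \<partial>nu)"
      using A_int[of "{0}"] A_op_nn_integral[OF sets_nu, of "indicator {0}" k] by simp
    also have "\<dots> = (\<integral>\<^sup>+ x. 0 \<partial>nu)"
    proof (intro nn_integral_cong)
      fix x :: 'a
      have "(\<integral>\<^sup>+ r. indicator {0<..} r * ennreal (a_kernel k r (norm x)) * indicator {0} ((r / norm x) *\<^sub>R x) \<partial>lborel)
         = (\<integral>\<^sup>+ (r::real). 0 \<partial>lborel)" if "x \<noteq> 0"
        using that by (intro nn_integral_cong) (auto simp: indicator_def)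
      then show "indicator (UNIV - {0}) x * (\<integral>\<^sup>+ r. indicator {0<..} r * ennreal (a_kernel k r (norm x)) * indicator {0} ((r / norm x) *\<^sub>R x) \<partial>lborel) = 0"
        by (cases "x = 0") auto
    qed
    finally show ?thesis by simp
  qed
  have A_fin: "(\<integral>\<^sup>+ y. ennreal (min 1 (norm y ^ 2)) \<partial>A_op k nu) < \<infinity>"
  proof -
    have "(\<integral>\<^sup>+ y. ennreal (min 1 (norm y ^ 2)) \<partial>A_op k nu) = (\<integral>\<^sup>+ x. indicator (UNIV - {0}) x *
      (\<integral>\<^sup>+ r. indicator {0<..} r * ennreal (a_kernel k r (norm x)) * ennreal (min 1 (norm ((r / norm x) *\<^sub>R x) ^ 2)) \<partial>lborel) \<partial>nu)"
      by (rule A_op_nn_integral[OF sets_nu]) measurable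
    also have "\<dots> \<le> (\<integral>\<^sup>+ x. ennreal (min 1 (norm x ^ k)) \<partial>nu)"
    proof (intro nn_integral_mono)
      fix x :: 'a
      show "indicator (UNIV - {0}) x *
        (\<integral>\<^sup>+ r. indicator {0<..} r * ennreal (a_kernel k r (norm x)) * ennreal (min 1 (norm ((r / norm x) *\<^sub>R x) ^ 2)) \<partial>lborel)
        \<le> ennreal (min 1 (norm x ^ k))"
      proof (cases "x = 0")
        case True then show ?thesis by simp
      next
        case False
        have "(\<integral>\<^sup>+ r. indicator {0<..} r * ennreal (a_kernel k r (norm x)) * ennreal (min 1 (norm ((r / norm x) *\<^sub>R x) ^ 2)) \<partial>lborel)
            = (\<integral>\<^sup>+ r. indicator {0<..} r * ennreal (a_kernel k r (norm x)) * ennreal (min 1 (r\<^sup>2)) \<partial>lborel)"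
          using False by (intro nn_integral_cong) (auto simp: indicator_def)
        also have "\<dots> \<le> ennreal (min 1 (norm x ^ k))"
          using False by (intro kernel_int_le[OF k]) simp
        finally show ?thesis using False by simp
      qed
    qed
    finally show ?thesis using fin_nu by (simp add: le_less_trans)
  qed
  have levy: "levy_measure (A_op k nu)"
    unfolding levy_measure_k_def using sets_A A0 A_fin by simp
  have ell_r_meas[measurable]: "ell \<xi> \<in> borel_measurable borel" if \<xi>: "\<xi> \<in> sphere 0 1" for \<xi>
    using measurable_compose_Pair1[OF _ ell_meas, of \<xi>] \<xi> by (simp add: space_X)
  have ell_r_meas': "ell \<xi> \<in> borel_measurable (restrict_space lborel {0<..})" if \<xi>: "\<xi> \<in> sphere 0 1" for \<xi>
    using ell_r_meas[OF \<xi>] by (intro measurable_restrict_space1) (simp add: measurable_lborel1)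
  have nuxi_em: "emeasure (density (restrict_space lborel {0<..}) (ell \<xi>)) E =
      (\<integral>\<^sup>+ r. indicator {0<..} r * ell \<xi> r * indicator E r \<partial>lborel)"
    if \<xi>: "\<xi> \<in> sphere 0 1" and E: "E \<in> sets (restrict_space borel {0<..})" for \<xi> E
  proof -
    have E': "E \<in> sets (restrict_space lborel {0<..})" using E by (simp add: sets_restrict_space)
    have "emeasure (density (restrict_space lborel {0<..}) (ell \<xi>)) E =
        (\<integral>\<^sup>+ r. ell \<xi> r * indicator E r \<partial>restrict_space lborel {0<..})"
      by (rule emeasure_density[OF ell_r_meas'[OF \<xi>] E'])
    also have "\<dots> = (\<integral>\<^sup>+ r. ell \<xi> r * indicator E r * indicator {0<..} r \<partial>lborel)"
      by (rule nn_integral_restrict_space) simp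
    finally show ?thesis by (simp add: ac_simps)
  qed
  define b where "b \<xi> = Sup (ereal ` {r. 0 < r \<and> 0 < ell \<xi> r})" for \<xi>
  have b_props: "0 < b \<xi> \<and> (\<forall>r>0. ereal r < b \<xi> \<longrightarrow> ell \<xi> r > 0) \<and>
         (b \<xi> < \<infinity> \<longrightarrow> (\<forall>r>0. ereal r \<ge> b \<xi> \<longrightarrow> ell \<xi> r = 0))" if \<xi>: "\<xi> \<in> sphere 0 1" for \<xi>
  proof (intro conjI allI impI)
    obtain r0 where r0: "0 < r0" "0 < ell \<xi> r0" using ell_ex[OF \<xi>] by auto
    have "ereal r0 \<le> b \<xi>" unfolding b_def using r0 by (intro Sup_upper) auto
    then show "0 < b \<xi>" using r0(1) by (metis ereal_less(2) order_less_le_trans)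
  next
    fix r assume r: "0 < r" "ereal r < b \<xi>"
    then obtain r' where r': "0 < r'" "0 < ell \<xi> r'" "ereal r < ereal r'" by (auto simp: b_def less_Sup_iff)
    show "0 < ell \<xi> r" using ell_down[OF \<xi> r(1) _ r'(2)] r'(3) by simp
  next
    fix r assume r: "0 < r" "b \<xi> \<le> ereal r"
    show "ell \<xi> r = 0"
    proof (rule ccontr)
      assume "ell \<xi> r \<noteq> 0"
      then have "0 < ell \<xi> r" by (simp add: zero_less_iff_neq_zero)
      then obtain r' where r': "r < r'" "0 < ell \<xi> r'" using ell_open[OF \<xi> r(1)] by auto
      have "ereal r' \<le> b \<xi>" unfolding b_def using r' r(1) by (intro Sup_upper) auto
      then have "ereal r' \<le> ereal r" using r(2) by (rule order_trans)
      then show False using r'(1) by simp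
    qed
  qed
  have nuxi_pos: "0 < emeasure (density (restrict_space lborel {0<..}) (ell \<xi>)) {0<..}" if \<xi>: "\<xi> \<in> sphere 0 1" for \<xi>
  proof (rule ccontr)
    assume "\<not> ?thesis"
    then have "(\<integral>\<^sup>+ r. indicator {0<..} r * ell \<xi> r * indicator {0<..} r \<partial>lborel) = 0"
      using nuxi_em[OF \<xi>, of "{0<..}"] by (simp add: zero_less_iff_neq_zero sets_restrict_space_iff)
    then have "AE r in lborel. indicator {0<..} r * ell \<xi> r * indicator {0<..} r = 0"
    proof (subst (asm) nn_integral_0_iff_AE)
      show "(\<lambda>r. indicator {0<..} r * ell \<xi> r * indicator {0<..} r) \<in> borel_measurable lborel"
        using ell_r_meas[OF \<xi>] by measurable
    qed
    moreover obtain r0 where r0: "0 < r0" "0 < ell \<xi> r0" using ell_ex[OF \<xi>] by auto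
    ultimately have "AE r in lborel. r \<notin> {0<..r0}"
    proof (elim eventually_mono)
      fix r assume "indicator {0<..} r * ell \<xi> r * indicator {0<..} r = (0::ennreal)"
      then show "r \<notin> {0<..r0}" using ell_down[OF \<xi> _ _ r0(2), of r] by (auto simp: indicator_def)
    qed
    then have "{0<..r0} \<in> null_sets lborel" by (subst AE_iff_null_sets) auto
    then have "emeasure lborel {0<..r0} = 0" by (simp add: null_sets_def)
    then show False using r0(1) emeasure_lborel_Ioc[of 0 r0] by simp
  qed
  have polar: "polar_decomposition (A_op k nu) lam (\<lambda>\<xi>. density (restrict_space lborel {0<..}) (ell \<xi>))"
    unfolding polar_decomposition_def
  proof (intro conjI ballI)
    show "sets lam = sets (restrict_space borel (sphere 0 1))" by (simp add: sets_lam X_def)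
  next
    fix \<xi> :: 'a assume "\<xi> \<in> sphere 0 1"
    show "sets (density (restrict_space lborel {0<..}) (ell \<xi>)) = sets (restrict_space borel {0<..})"
      by (simp add: sets_restrict_space)
  next
    fix E assume E: "E \<in> sets (restrict_space borel {0::real<..})"
    then have E': "E \<in> sets borel" by (simp add: sets_restrict_space_iff)
    have "(\<lambda>\<xi>. \<integral>\<^sup>+ r. indicator {0<..} r * ell \<xi> r * indicator E r \<partial>lborel) \<in> borel_measurable lam"
    proof (rule lborel.borel_measurable_nn_integral)
      have "(\<lambda>p. indicator {0<..} (snd p) * ell (fst p) (snd p) * indicator E (snd p)) \<in> borel_measurable (X \<Otimes>\<^sub>M lborel)"
        using E' by measurable
      then show "(\<lambda>(\<xi>, r). indicator {0<..} r * ell \<xi> r * indicator E r) \<in> borel_measurable (lam \<Otimes>\<^sub>M lborel)"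
        by (simp add: measurable_cong_sets[OF sets_pair_measure_cong[OF sets_lam refl] refl] case_prod_beta')
    qed
    then show "(\<lambda>\<xi>. emeasure (density (restrict_space lborel {0<..}) (ell \<xi>)) E) \<in> borel_measurable lam"
      by (rule measurable_cong[THEN iffD1, rotated]) (simp add: space_lam nuxi_em[OF _ E])
  next
    fix \<xi> :: 'a assume "\<xi> \<in> sphere 0 1"
    then show "0 < emeasure (density (restrict_space lborel {0<..}) (ell \<xi>)) {0<..}" by (rule nuxi_pos)
  next
    fix B :: "'a set" assume B: "B \<in> sets borel"
    have "emeasure (A_op k nu) B = (\<integral>\<^sup>+ \<xi>. (\<integral>\<^sup>+ r. indicator {0<..} r * ell \<xi> r * indicator B (r *\<^sub>R \<xi>) \<partial>lborel) \<partial>lam)"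
      using A_int[OF B] A_op_nn_integral[OF sets_nu, of "indicator B" k] M1[of "indicator B"] B by simp
    also have "\<dots> = (\<integral>\<^sup>+ \<xi>. (\<integral>\<^sup>+ r. indicator B (r *\<^sub>R \<xi>) \<partial>density (restrict_space lborel {0<..}) (ell \<xi>)) \<partial>lam)"
    proof (intro nn_integral_cong)
      fix \<xi> assume "\<xi> \<in> space lam"
      then have \<xi>: "\<xi> \<in> sphere 0 1" by (simp add: space_lam)
      have Bm: "(\<lambda>r. indicator B (r *\<^sub>R \<xi>)) \<in> borel_measurable (restrict_space lborel {0<..})"
      proof (intro measurable_restrict_space1)
        have "(\<lambda>r::real. r *\<^sub>R \<xi>) \<in> borel \<rightarrow>\<^sub>M borel" by measurable
        from measurable_compose[OF this borel_measurable_indicator[OF B]]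
        show "(\<lambda>r. indicator B (r *\<^sub>R \<xi>)) \<in> borel_measurable lborel" by (simp add: measurable_lborel1)
      qed
      have "(\<integral>\<^sup>+ r. indicator B (r *\<^sub>R \<xi>) \<partial>density (restrict_space lborel {0<..}) (ell \<xi>)) =
          (\<integral>\<^sup>+ r. ell \<xi> r * indicator B (r *\<^sub>R \<xi>) \<partial>restrict_space lborel {0<..})"
        by (rule nn_integral_density[OF ell_r_meas'[OF \<xi>] Bm])
      also have "\<dots> = (\<integral>\<^sup>+ r. ell \<xi> r * indicator B (r *\<^sub>R \<xi>) * indicator {0<..} r \<partial>lborel)"
        by (rule nn_integral_restrict_space) simp
      finally show "(\<integral>\<^sup>+ r. indicator {0<..} r * ell \<xi> r * indicator B (r *\<^sub>R \<xi>) \<partial>lborel) =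
          (\<integral>\<^sup>+ r. indicator B (r *\<^sub>R \<xi>) \<partial>density (restrict_space lborel {0<..}) (ell \<xi>))"
        by (simp add: ac_simps)
    qed
    finally show "emeasure (A_op k nu) B = (\<integral>\<^sup>+ \<xi>. (\<integral>\<^sup>+ r. indicator B (r *\<^sub>R \<xi>) \<partial>density (restrict_space lborel {0<..}) (ell \<xi>)) \<partial>lam)" .
  qed
  have meas: "(\<lambda>p. ell (fst p) (snd p)) \<in> borel_measurable (restrict_space borel unit_sphere \<Otimes>\<^sub>M restrict_space borel {0<..})"
  proof -
    have "(\<lambda>p. (fst p, snd p)) \<in> (restrict_space borel unit_sphere \<Otimes>\<^sub>M restrict_space borel {0::real<..}) \<rightarrow>\<^sub>M (X \<Otimes>\<^sub>M borel)"
    proof (rule measurable_Pair)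
      show "fst \<in> (restrict_space borel unit_sphere \<Otimes>\<^sub>M restrict_space borel {0::real<..}) \<rightarrow>\<^sub>M X"
        unfolding X_def by (rule measurable_fst)
      have "(\<lambda>x::real. x) \<in> restrict_space borel {0<..} \<rightarrow>\<^sub>M borel"
        by (rule measurable_restrict_space1[OF measurable_ident_sets[OF refl]])
      from measurable_compose[OF measurable_snd this]
      show "snd \<in> (restrict_space borel unit_sphere \<Otimes>\<^sub>M restrict_space borel {0::real<..}) \<rightarrow>\<^sub>M borel"
        by blast
    qed
    from measurable_compose[OF this ell_meas] show ?thesis by simp
  qed
  show ?thesis
    using levy polar meas ell_lsc b_props by blast
qed


end
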